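(* Let $A\in\mathbb{R}^{n\times n}$, $B_i\in\mathbb{R}^{n\times p_i}$, $C_i\in\mathbb{R}^{q_i\times n}$, $i\in\{1,\dots,m\}$, define a jointly controllable and jointly observable $m$-channel linear system with strongly connected neighbor graph $\mathbb{N}$ on $\{1,\dots,m\}$, and let $F_i\in\mathbb{R}^{p_i\times n}$ be arbitrary. Let $b_i$ be the $i$th unit vector of $\mathbb{R}^m$, $\tilde A = I_m\otimes(A+\sum_{j=1}^mB_jF_j)-Q$ where $Q$ is the $nm\times nm$ block matrix with $(i,j)$th block $B_jF_j$, $\tilde B_i=b_i\otimes I_n$, $\hat C_i=C_i\tilde B_i'$, and $\tilde C_i=\mathrm{column}\{C_{ij^i_1},\dots,C_{ij^i_{m_i}}\}$ with $\{j^i_1,\dots,j^i_{m_i}\}=\mathcal{N}_i$ and $C_{ij}=(b_i'-b_j')\otimes I_n$. Then for any given matrices $K_i\in\mathbb{R}^{n\times q_i}$, $i\in\{1,\dots,m\}$, there exist matrices $H_i\in\mathbb{R}^{n\times nm_i}$ such that for every $q\in\{1,\dots,m\}$ the pair $\big(\tilde A+\sum_{i=1}^m\tilde B_i(K_i\hat C_i+H_i\tilde C_i),\ \tilde B_q\big)$ is controllable with controllability index $m$.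
   Context: Jointly controllable: $(A,[B_1\ \cdots\ B_m])$ controllable; jointly observable: $(\mathrm{column}\{C_1,\dots,C_m\},A)$ observable. The neighbor graph has an arc $j\to i$ iff $j$ is a neighbor of $i$; $\mathcal{N}_i$ is the set of neighbors of $i$ including $i$. The controllability index of a controllable pair $(F,G)$ with $N$-dimensional state is the smallest $k$ with $\mathrm{rank}[G\ FG\ \cdots\ F^{k-1}G]=N$. *)

theory Defs
  imports "Jordan_Normal_Form.DL_Rank"
begin

text \<open>All matrices are real matrices of type real mat (Jordan_Normal_Form); channels/agents
  are indexed by 0..m-1 instead of 1..m.\<close>

definition append_cols :: "'a :: zero mat \<Rightarrow> 'a mat \<Rightarrow> 'a mat" where
  "append_cols A B = four_block_mat A B (0\<^sub>m 0 (dim_col A)) (0\<^sub>m 0 (dim_col B))"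

definition hcat :: "nat \<Rightarrow> 'a :: zero mat list \<Rightarrow> 'a mat" where
  "hcat nr Ms = foldr append_cols Ms (0\<^sub>m nr 0)"

definition vcat :: "nat \<Rightarrow> 'a :: zero mat list \<Rightarrow> 'a mat" where
  "vcat nc Ms = foldr append_rows Ms (0\<^sub>m 0 nc)"

definition kron :: "'a :: times mat \<Rightarrow> 'a mat \<Rightarrow> 'a mat" where
  "kron A B = mat (dim_row A * dim_row B) (dim_col A * dim_col B)
     (\<lambda>(i,j). A $$ (i div dim_row B, j div dim_col B) * B $$ (i mod dim_row B, j mod dim_col B))"

definition msum :: "nat \<Rightarrow> nat \<Rightarrow> ('b \<Rightarrow> 'a :: comm_monoid_add mat) \<Rightarrow> 'b set \<Rightarrow> 'a mat" where
  "msum nr nc f I = mat nr nc (\<lambda>ij. \<Sum>k\<in>I. f k $$ ij)"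

definition mrank :: "real mat \<Rightarrow> nat" where
  "mrank M = vec_space.rank (dim_row M) M"

definition ctrb_mat :: "real mat \<Rightarrow> real mat \<Rightarrow> nat \<Rightarrow> real mat" where
  "ctrb_mat F G k = hcat (dim_row F) (map (\<lambda>l. (F ^\<^sub>m l) * G) [0..<k])"

definition controllable :: "real mat \<Rightarrow> real mat \<Rightarrow> bool" where
  "controllable F G \<longleftrightarrow> mrank (ctrb_mat F G (dim_row F)) = dim_row F"

definition controllability_index :: "real mat \<Rightarrow> real mat \<Rightarrow> nat" where
  "controllability_index F G = (LEAST k. mrank (ctrb_mat F G k) = dim_row F)"

definition obsv_mat :: "real mat \<Rightarrow> real mat \<Rightarrow> real mat" where
  "obsv_mat C A = vcat (dim_col A) (map (\<lambda>l. C * (A ^\<^sub>m l)) [0..<dim_row A])"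

definition observable :: "real mat \<Rightarrow> real mat \<Rightarrow> bool" where
  "observable C A \<longleftrightarrow> mrank (obsv_mat C A) = dim_row A"

text \<open>Neighbor graph on {0..<m}: nbr i j means j is a neighbor of i, i.e. arc j -> i.\<close>
definition neighbor_arcs :: "nat \<Rightarrow> (nat \<Rightarrow> nat \<Rightarrow> bool) \<Rightarrow> (nat \<times> nat) set" where
  "neighbor_arcs m nbr = {(j, i). i < m \<and> j < m \<and> nbr i j}"

definition strongly_connected :: "nat \<Rightarrow> (nat \<Rightarrow> nat \<Rightarrow> bool) \<Rightarrow> bool" where
  "strongly_connected m nbr \<longleftrightarrow> (\<forall>i<m. \<forall>j<m. (i, j) \<in> (neighbor_arcs m nbr)\<^sup>*)"

definition nbhd :: "nat \<Rightarrow> (nat \<Rightarrow> nat \<Rightarrow> bool) \<Rightarrow> nat \<Rightarrow> nat set" where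
  "nbhd m nbr i = {j. j < m \<and> (j = i \<or> nbr i j)}"

definition unitv :: "nat \<Rightarrow> nat \<Rightarrow> real mat" where
  "unitv m i = mat m 1 (\<lambda>(r, c). if r = i then 1 else 0)"

end

theory Submission
  imports Defs "HOL-Computational_Algebra.Polynomial" "Jordan_Normal_Form.DL_Rank_Submatrix"
begin


lemma append_cols_index:
  assumes "i < dim_row A" "j < dim_col A + dim_col B"
  shows "append_cols A B $$ (i,j) = (if j < dim_col A then A $$ (i,j) else B $$ (i, j - dim_col A))"
  using assms unfolding append_cols_def by simp

lemma append_cols_dims[simp]:
  "dim_row (append_cols A B) = dim_row A" "dim_col (append_cols A B) = dim_col A + dim_col B"
  unfolding append_cols_def by simp_all

lemma hcat_carrier:
  assumes "\<forall>M\<in>set Ms. M \<in> carrier_mat nr w"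
  shows "hcat nr Ms \<in> carrier_mat nr (length Ms * w)"
  using assms
proof (induction Ms)
  case Nil then show ?case by (simp add: hcat_def)
next
  case (Cons M Ms)
  then have c: "hcat nr Ms \<in> carrier_mat nr (length Ms * w)" "M \<in> carrier_mat nr w" by auto
  have "hcat nr (M # Ms) = append_cols M (hcat nr Ms)" by (simp add: hcat_def)
  then show ?case using c unfolding carrier_mat_def by simp
qed

lemma hcat_index:
  assumes "\<forall>M\<in>set Ms. M \<in> carrier_mat nr w" "i < nr" "j < length Ms * w"
  shows "hcat nr Ms $$ (i,j) = (Ms ! (j div w)) $$ (i, j mod w)"
  using assms
proof (induction Ms arbitrary: j)
  case Nil then show ?case by simp
next
  case (Cons M Ms)
  have c: "hcat nr Ms \<in> carrier_mat nr (length Ms * w)" "M \<in> carrier_mat nr w"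
    using Cons.prems hcat_carrier[of Ms nr w] by auto
  have h: "hcat nr (M # Ms) = append_cols M (hcat nr Ms)" by (simp add: hcat_def)
  show ?case
  proof (cases "j < w")
    case True
    then show ?thesis using c Cons.prems by (subst h, subst append_cols_index) auto
  next
    case False
    then have j: "j - w < length Ms * w" using Cons.prems by auto
    have w0: "0 < w" using Cons.prems by (cases "w = 0") auto
    have "j div w = Suc ((j - w) div w)" using False w0 by (simp add: le_div_geq)
    moreover have "j mod w = (j - w) mod w" using False by (simp add: le_mod_geq)
    ultimately show ?thesis using c Cons.prems Cons.IH[of "j - w"] j False
      by (subst h, subst append_cols_index) auto
  qed
qed

lemma vcat_carrier:
  assumes "\<forall>M\<in>set Ms. M \<in> carrier_mat h nc"
  shows "vcat nc Ms \<in> carrier_mat (length Ms * h) nc"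
  using assms
proof (induction Ms)
  case Nil then show ?case by (simp add: vcat_def)
next
  case (Cons M Ms)
  then have c: "vcat nc Ms \<in> carrier_mat (length Ms * h) nc" "M \<in> carrier_mat h nc" by auto
  have "vcat nc (M # Ms) = append_rows M (vcat nc Ms)" by (simp add: vcat_def)
  then show ?case using c by simp
qed

lemma vcat_index:
  assumes "\<forall>M\<in>set Ms. M \<in> carrier_mat h nc" "i < length Ms * h" "j < nc"
  shows "vcat nc Ms $$ (i,j) = (Ms ! (i div h)) $$ (i mod h, j)"
  using assms
proof (induction Ms arbitrary: i)
  case Nil then show ?case by simp
next
  case (Cons M Ms)
  have c: "vcat nc Ms \<in> carrier_mat (length Ms * h) nc" "M \<in> carrier_mat h nc"
    using Cons.prems vcat_carrier[of Ms h nc] by auto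
  have hh: "vcat nc (M # Ms) = append_rows M (vcat nc Ms)" by (simp add: vcat_def)
  show ?case
  proof (cases "i < h")
    case True
    then show ?thesis using c Cons.prems by (subst hh, unfold append_rows_def, subst index_mat_four_block) auto
  next
    case False
    then have j: "i - h < length Ms * h" using Cons.prems by auto
    have h0: "0 < h" using Cons.prems by (cases "h = 0") auto
    have "i div h = Suc ((i - h) div h)" using False h0 by (simp add: le_div_geq)
    moreover have "i mod h = (i - h) mod h" using False by (simp add: le_mod_geq)
    ultimately show ?thesis using c Cons.prems Cons.IH[of "i - h"] j False
      by (subst hh, unfold append_rows_def, subst index_mat_four_block) auto
  qed
qed

lemma sum_group_div_mod:
  fixes g :: "nat \<Rightarrow> 'a::comm_monoid_add"
  shows "(\<Sum>j<m*n. g j) = (\<Sum>k<m. \<Sum>a<n. g (k*n + a))"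
proof -
  have "(\<Sum>j<m*n. g j) = (\<Sum>k<m. sum g {k*n..<k*n+n})" by (rule sum.nat_group[symmetric])
  also have "\<dots> = (\<Sum>k<m. \<Sum>a<n. g (k*n + a))"
  proof (rule sum.cong[OF refl])
    fix k
    show "sum g {k*n..<k*n+n} = (\<Sum>a<n. g (k*n + a))"
      using sum.shift_bounds_nat_ivl[of g 0 "k*n" n] by (simp add: lessThan_atLeast0 add.commute)
  qed
  finally show ?thesis .
qed



locale treeop =
  fixes d l :: "nat \<Rightarrow> real" and par :: "nat \<Rightarrow> nat" and rt :: nat and rk :: "nat \<Rightarrow> nat"
begin

definition opT :: "nat set \<Rightarrow> (nat \<Rightarrow> real) \<Rightarrow> (nat \<Rightarrow> real)" where
  "opT S x = (\<lambda>k. if k \<in> S then d k * x k + (if k = rt then 0 else l k * x (par k)) else 0)"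

definition pev :: "nat set \<Rightarrow> real poly \<Rightarrow> (nat \<Rightarrow> real) \<Rightarrow> (nat \<Rightarrow> real)" where
  "pev S f x = (\<lambda>k. \<Sum>i<Suc (degree f). coeff f i * (opT S ^^ i) x k)"

definition delta :: "nat \<Rightarrow> real" where "delta = (\<lambda>k. if k = rt then 1 else 0)"

definition restr :: "nat set \<Rightarrow> (nat \<Rightarrow> real) \<Rightarrow> (nat \<Rightarrow> real)" where
  "restr T x = (\<lambda>k. if k \<in> T then x k else 0)"

definition downclosed :: "nat set \<Rightarrow> bool" where
  "downclosed T \<longleftrightarrow> rt \<in> T \<and> (\<forall>k\<in>T. k \<noteq> rt \<longrightarrow> par k \<in> T)"

definition mu :: "nat set \<Rightarrow> real poly" where
  "mu S = (\<Prod>k\<in>S. [:- d k, 1:])"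

lemma opT_sum: "opT S (\<lambda>k. \<Sum>i\<in>I. c i * z i k) = (\<lambda>k. \<Sum>i\<in>I. c i * opT S (z i) k)"
  unfolding opT_def by (auto simp: sum_distrib_left sum.distrib algebra_simps)

lemma opT_scale: "opT S (\<lambda>k. c * x k) = (\<lambda>k. c * opT S x k)"
  unfolding opT_def by (auto simp: algebra_simps)

lemma opT_zero: "opT S (\<lambda>k. 0) = (\<lambda>k. 0)"
  unfolding opT_def by auto

lemma pow_zero: "(opT S ^^ i) (\<lambda>k. 0) = (\<lambda>k. 0)"
  by (induction i) (auto simp: opT_zero)

lemma pev_alt:
  assumes "degree f < N"
  shows "pev S f x = (\<lambda>k. \<Sum>i<N. coeff f i * (opT S ^^ i) x k)"
proof
  fix k
  have "(\<Sum>i<N. coeff f i * (opT S ^^ i) x k) = (\<Sum>i<Suc (degree f). coeff f i * (opT S ^^ i) x k)"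
    using assms by (intro sum.mono_neutral_right) (auto simp: coeff_eq_0)
  then show "pev S f x k = (\<Sum>i<N. coeff f i * (opT S ^^ i) x k)" unfolding pev_def by simp
qed

lemma pev_pCons: "pev S (pCons a f) x = (\<lambda>k. a * x k + opT S (pev S f x) k)"
proof -
  define N where "N = Suc (degree f)"
  have d1: "degree (pCons a f) < Suc N" unfolding N_def
    by (metis degree_pCons_le le_imp_less_Suc)
  have "pev S (pCons a f) x = (\<lambda>k. \<Sum>i<Suc N. coeff (pCons a f) i * (opT S ^^ i) x k)"
    by (rule pev_alt[OF d1])
  also have "\<dots> = (\<lambda>k. a * x k + (\<Sum>i<N. coeff f i * (opT S ^^ Suc i) x k))"
    by (subst sum.lessThan_Suc_shift) simp
  also have "opT S (pev S f x) = (\<lambda>k. \<Sum>i<N. coeff f i * opT S ((opT S ^^ i) x) k)"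
    unfolding pev_def N_def by (rule opT_sum)
  then have "(\<lambda>k. a * x k + (\<Sum>i<N. coeff f i * (opT S ^^ Suc i) x k)) = (\<lambda>k. a * x k + opT S (pev S f x) k)"
    by simp
  finally
  show ?thesis .
qed

lemma pev_zero_poly: "pev S 0 x = (\<lambda>k. 0)"
  unfolding pev_def by simp

lemma pev_add: "pev S (f + g) x = (\<lambda>k. pev S f x k + pev S g x k)"
proof -
  define N where "N = Suc (max (degree f) (degree g))"
  have "degree (f + g) < N" "degree f < N" "degree g < N" unfolding N_def
    using degree_add_le_max[of f g] by auto
  then show ?thesis
    by (simp add: pev_alt[of _ N] sum.distrib ring_distribs)
qed

lemma pev_smult: "pev S (Polynomial.smult c f) x = (\<lambda>k. c * pev S f x k)"
proof -
  define N where "N = Suc (degree f)"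
  have "degree (Polynomial.smult c f) < N" "degree f < N" unfolding N_def by auto
  then show ?thesis
    by (simp add: pev_alt[of _ N] sum_distrib_left algebra_simps)
qed

lemma pev_x0: "pev S f (\<lambda>k. 0) = (\<lambda>k. 0)"
  unfolding pev_def by (simp add: pow_zero)

lemma pev_mult: "pev S (f * g) x = pev S f (pev S g x)"
proof (induction f rule: pCons_induct)
  case 0
  then show ?case by (simp add: pev_zero_poly)
next
  case (pCons a f)
  have "pev S (pCons a f * g) x = pev S (Polynomial.smult a g + pCons 0 (f * g)) x" by simp
  also have "\<dots> = (\<lambda>k. a * pev S g x k + opT S (pev S f (pev S g x)) k)"
    by (simp add: pev_add pev_smult pev_pCons pCons.IH)
  also have "\<dots> = pev S (pCons a f) (pev S g x)" by (simp add: pev_pCons)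
  finally show ?case .
qed

lemma pev_lin: "pev S [:- c, 1:] x = (\<lambda>k. opT S x k - c * x k)"
  by (simp add: pev_pCons pev_zero_poly opT_zero)

lemma pev_const: "pev S [:c:] x = (\<lambda>k. c * x k)"
  by (simp add: pev_pCons pev_zero_poly opT_zero)

lemma pev_eigen:
  assumes "opT S v = (\<lambda>k. a * v k)"
  shows "pev S g v = (\<lambda>k. poly g a * v k)"
proof (induction g rule: pCons_induct)
  case 0 then show ?case by (simp add: pev_zero_poly)
next
  case (pCons b g)
  show ?case
    by (simp only: pev_pCons pCons.IH opT_scale assms) (simp add: algebra_simps)
qed

lemma opT_supp: "k \<notin> S \<Longrightarrow> opT S x k = 0" unfolding opT_def by simp

lemma pev_supp:
  assumes "k \<notin> S" "x k = 0"
  shows "pev S f x k = 0"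
proof (induction f rule: pCons_induct)
  case 0 then show ?case by (simp add: pev_zero_poly)
next
  case (pCons a f) then show ?case using assms by (simp add: pev_pCons opT_supp)
qed

lemma opT_restr:
  assumes "T \<subseteq> S" "downclosed T"
  shows "restr T (opT S x) = opT T (restr T x)"
  using assms unfolding restr_def opT_def downclosed_def by (auto intro!: ext)

lemma pow_restr:
  assumes "T \<subseteq> S" "downclosed T"
  shows "restr T ((opT S ^^ i) x) = (opT T ^^ i) (restr T x)"
  by (induction i) (simp_all add: opT_restr[OF assms])

lemma pev_restr:
  assumes "T \<subseteq> S" "downclosed T"
  shows "restr T (pev S f x) = pev T f (restr T x)"
proof (induction f rule: pCons_induct)
  case 0 then show ?case by (simp add: pev_zero_poly restr_def)
next
  case (pCons a f)
  have "restr T (pev S (pCons a f) x) = (\<lambda>k. a * restr T x k + restr T (opT S (pev S f x)) k)"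
    by (auto simp: pev_pCons restr_def)
  also have "\<dots> = pev T (pCons a f) (restr T x)"
    by (simp add: opT_restr[OF assms] pCons.IH pev_pCons)
  finally show ?case .
qed

lemma restr_delta: "rt \<in> T \<Longrightarrow> restr T delta = delta"
  unfolding restr_def delta_def by auto

lemma pev_support:
  assumes "rt \<in> S" "k \<notin> S" shows "pev S f delta k = 0"
  using assms by (intro pev_supp) (auto simp: delta_def)

lemma propag:
  assumes S'fin: "\<forall>k\<in>S'. k \<noteq> rt \<longrightarrow> par k \<in> S' \<and> rk (par k) < rk k \<and> l k \<noteq> 0"
    and eq: "\<forall>k\<in>S'. (d k - a) * y k + (if k = rt then 0 else l k * y (par k)) + (if k = rt then r else 0) = 0"
    and r: "r \<noteq> 0"
  shows "k \<in> S' \<Longrightarrow> y k \<noteq> 0"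
proof (induction "rk k" arbitrary: k rule: less_induct)
  case less
  show ?case
  proof (cases "k = rt")
    case True
    then show ?thesis using eq less.prems r by force
  next
    case False
    then have p: "par k \<in> S'" "rk (par k) < rk k" "l k \<noteq> 0" using S'fin less.prems by auto
    then have "y (par k) \<noteq> 0" using less.hyps by blast
    then show ?thesis using eq less.prems False p(3) by force
  qed
qed

lemma tree_claim:
  assumes "finite S" "downclosed S"
    and tr: "\<forall>k\<in>S. k \<noteq> rt \<longrightarrow> rk (par k) < rk k \<and> l k \<noteq> 0"
    and inj: "inj_on d S"
  shows "pev S f delta = (\<lambda>k. 0) \<longleftrightarrow> mu S dvd f"
  using assms
proof (induction "card S" arbitrary: S f rule: less_induct)
  case less
  note fin = less.prems(1) and dc = less.prems(2) and tr = less.prems(3) and inj = less.prems(4)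
  have rtS: "rt \<in> S" using dc unfolding downclosed_def by auto
  show ?case
  proof (cases "S = {rt}")
    case True
    have "opT S delta = (\<lambda>k. d rt * delta k)" using True unfolding opT_def delta_def by auto
    then have "pev S f delta = (\<lambda>k. poly f (d rt) * delta k)" by (rule pev_eigen)
    then have "pev S f delta = (\<lambda>k. 0) \<longleftrightarrow> poly f (d rt) = 0"
      by (auto simp: delta_def fun_eq_iff)
    also have "\<dots> \<longleftrightarrow> mu S dvd f" using True by (simp add: mu_def poly_eq_0_iff_dvd)
    finally show ?thesis .
  next
    case False
    then have ne: "S - {rt} \<noteq> {}" using rtS by auto
    define M where "M = Max (rk ` (S - {rt}))"
    have "M \<in> rk ` (S - {rt})" unfolding M_def using ne fin by (intro Max_in) auto
    then obtain lf where lf: "lf \<in> S" "lf \<noteq> rt" "rk lf = M" by auto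
    have maxr: "\<And>k. k \<in> S \<Longrightarrow> k \<noteq> rt \<Longrightarrow> rk k \<le> rk lf"
      unfolding lf(3) M_def using fin by (intro Max_ge) auto
    define S' where "S' = S - {lf}"
    have parlf: "par lf \<in> S'" "rk (par lf) < rk lf" "l lf \<noteq> 0"
      using dc tr lf unfolding downclosed_def S'_def by auto
    have dc': "downclosed S'"
      unfolding downclosed_def S'_def
    proof (intro conjI ballI impI)
      show "rt \<in> S - {lf}" using rtS lf by auto
      fix k assume k: "k \<in> S - {lf}" "k \<noteq> rt"
      then have "par k \<in> S" "rk (par k) < rk k" using dc tr unfolding downclosed_def by auto
      moreover have "par k \<noteq> lf"
      proof
        assume "par k = lf"
        then have "rk lf < rk k" using \<open>rk (par k) < rk k\<close> by simp
        with maxr[of k] k show False by auto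
      qed
      ultimately show "par k \<in> S - {lf}" by auto
    qed
    have sub: "S' \<subseteq> S" unfolding S'_def by auto
    have card': "card S' < card S" unfolding S'_def using fin lf by (meson card_Diff1_less)
    have fin': "finite S'" using fin sub finite_subset by blast
    have tr': "\<forall>k\<in>S'. k \<noteq> rt \<longrightarrow> rk (par k) < rk k \<and> l k \<noteq> 0" using tr sub by auto
    have inj': "inj_on d S'" using inj sub inj_on_subset by blast
    note IH = less.hyps[OF card' fin' dc' tr' inj']
    have rtS': "rt \<in> S'" using dc' unfolding downclosed_def by auto
    have muS: "mu S = [:- d lf, 1:] * mu S'"
      unfolding mu_def S'_def using fin lf by (simp add: prod.remove)
    define v where "v = pev S (mu S') delta"
    have rv: "restr S' v = (\<lambda>k. 0)"
      unfolding v_def pev_restr[OF sub dc'] restr_delta[OF rtS'] using IH by simp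
    have v0: "\<And>k. k \<noteq> lf \<Longrightarrow> v k = 0"
    proof -
      fix k assume "k \<noteq> lf"
      show "v k = 0"
      proof (cases "k \<in> S")
        case True
        then have "k \<in> S'" using \<open>k \<noteq> lf\<close> S'_def by auto
        then show ?thesis using fun_cong[OF rv, of k] by (simp add: restr_def)
      next
        case False
        then show ?thesis unfolding v_def using pev_support rtS by blast
      qed
    qed
    have eig: "opT S v = (\<lambda>k. d lf * v k)"
    proof
      fix k
      show "opT S v k = d lf * v k"
      proof (cases "k \<in> S")
        case False then show ?thesis using v0[of k] lf by (auto simp: opT_def)
      next
        case True
        show ?thesis
        proof (cases "k = lf")
          case True
          then show ?thesis using lf parlf v0[of "par lf"] unfolding S'_def opT_def by auto
        next
          case False
          have "k \<noteq> rt \<Longrightarrow> par k \<in> S'" using dc' \<open>k \<in> S\<close> False unfolding downclosed_def S'_def by auto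
          then have "k \<noteq> rt \<Longrightarrow> par k \<noteq> lf" unfolding S'_def by auto
          then show ?thesis using v0[of k] v0[of "par k"] False \<open>k \<in> S\<close> unfolding opT_def by auto
        qed
      qed
    qed
    define r where "r = poly (mu S') (d lf)"
    have r0: "r \<noteq> 0"
    proof -
      have "r = (\<Prod>k\<in>S'. d lf - d k)" unfolding r_def mu_def by (simp add: poly_prod)
      moreover have "\<forall>k\<in>S'. d lf - d k \<noteq> 0"
        using inj lf unfolding S'_def inj_on_def by auto
      ultimately show ?thesis using fin' by simp
    qed
    have "poly (mu S' - [:r:]) (d lf) = 0" unfolding r_def by simp
    then obtain q where q: "mu S' - [:r:] = [:- d lf, 1:] * q"
      using poly_eq_0_iff_dvd by (metis dvdE)
    have muq: "mu S' = [:- d lf, 1:] * q + [:r:]" using q by (simp add: algebra_simps)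
    define y where "y = pev S q delta"
    have vexp: "v = (\<lambda>k. opT S y k - d lf * y k + r * delta k)"
      unfolding v_def muq y_def by (simp only: pev_add pev_mult pev_lin pev_const)
    have eqs: "\<forall>k\<in>S'. (d k - d lf) * y k + (if k = rt then 0 else l k * y (par k)) + (if k = rt then r else 0) = 0"
    proof
      fix k assume k: "k \<in> S'"
      then have "v k = 0" using v0 S'_def by auto
      then show "(d k - d lf) * y k + (if k = rt then 0 else l k * y (par k)) + (if k = rt then r else 0) = 0"
        using k sub unfolding vexp opT_def delta_def by (auto simp: algebra_simps)
    qed
    have S'prop: "\<forall>k\<in>S'. k \<noteq> rt \<longrightarrow> par k \<in> S' \<and> rk (par k) < rk k \<and> l k \<noteq> 0"
      using dc' tr' unfolding downclosed_def by auto
    have "y (par lf) \<noteq> 0" using propag[OF S'prop eqs r0] parlf by blast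
    then have vlf: "v lf \<noteq> 0"
      using lf parlf unfolding vexp opT_def delta_def by auto
    show ?thesis
    proof
      assume h: "pev S f delta = (\<lambda>k. 0)"
      have "pev S' f delta = (\<lambda>k. 0)"
        using arg_cong[OF h, of "restr S'"] unfolding pev_restr[OF sub dc'] restr_delta[OF rtS']
        by (simp add: restr_def)
      then have "mu S' dvd f" using IH by blast
      then obtain g where g: "f = mu S' * g" by (rule dvdE)
      have "pev S f delta = pev S g v" unfolding g v_def by (simp add: mult.commute pev_mult)
      also have "\<dots> = (\<lambda>k. poly g (d lf) * v k)" by (rule pev_eigen[OF eig])
      finally have "poly g (d lf) * v lf = 0" using h by (metis (mono_tags))
      then have "poly g (d lf) = 0" using vlf by simp
      then have "[:- d lf, 1:] dvd g" by (simp add: poly_eq_0_iff_dvd)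
      then show "mu S dvd f" unfolding muS g by (metis mult.commute mult_dvd_mono dvd_refl)
    next
      assume "mu S dvd f"
      then obtain g where g: "f = mu S * g" by (rule dvdE)
      have "pev S (mu S) delta = pev S [:- d lf, 1:] v" unfolding muS v_def by (simp only: pev_mult)
      also have "\<dots> = (\<lambda>k. 0)" unfolding pev_lin eig by simp
      finally have "pev S f delta = pev S g (\<lambda>k. 0)" unfolding g by (simp add: mult.commute pev_mult)
      then show "pev S f delta = (\<lambda>k. 0)" by (simp add: pev_x0)
    qed
  qed
qed

lemma mu_degree: "finite S \<Longrightarrow> degree (mu S) = card S"
  unfolding mu_def by (subst degree_prod_eq_sum_degree) auto

lemma tree_krylov:
  assumes "finite S" "downclosed S"
    and tr: "\<forall>k\<in>S. k \<noteq> rt \<longrightarrow> rk (par k) < rk k \<and> l k \<noteq> 0"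
    and inj: "inj_on d S" and cS: "card S = m"
    and z: "\<forall>k. (\<Sum>i<m. g i * (opT S ^^ i) delta k) = 0"
  shows "\<forall>i<m. g i = 0"
proof -
  have m0: "m > 0" using cS assms(1,2) unfolding downclosed_def
    by (metis card_gt_0_iff empty_iff)
  define f where "f = (\<Sum>i<m. monom (g i) i)"
  have cf: "coeff f i = (if i < m then g i else 0)" for i
    unfolding f_def by (simp add: coeff_sum coeff_monom)
  have df: "degree f < m"
  proof (cases "f = 0")
    case True then show ?thesis using m0 by simp
  next
    case False
    show ?thesis
    proof (rule ccontr)
      assume "\<not> degree f < m"
      then have "coeff f (degree f) = 0" using cf by simp
      then show False using False by simp
    qed
  qed
  have "pev S f delta = (\<lambda>k. \<Sum>i<m. coeff f i * (opT S ^^ i) delta k)" by (rule pev_alt[OF df])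
  also have "\<dots> = (\<lambda>k. 0)" using z cf by simp
  finally have "mu S dvd f" using tree_claim[OF assms(1-4)] by blast
  moreover have "degree (mu S) = m" using mu_degree[OF assms(1)] cS by simp
  ultimately have "f = 0" using df
    by (metis dvd_imp_degree_le leD)
  then show ?thesis using cf by (metis coeff_0)
qed

end



lemma pow_mat_Suc':
  assumes "A \<in> carrier_mat N N" shows "A ^\<^sub>m Suc k = A * A ^\<^sub>m k"
proof (induction k)
  case 0 then show ?case using assms by simp
next
  case (Suc k)
  have "A ^\<^sub>m Suc (Suc k) = (A * A ^\<^sub>m k) * A" using Suc by simp
  also have "\<dots> = A * (A ^\<^sub>m k * A)" using assms by (intro assoc_mult_mat) auto
  finally show ?case by simp
qed

lemma kron_unit_carrier: "kron (unitv m i) (1\<^sub>m n) \<in> carrier_mat (n*m) n"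
  unfolding kron_def unitv_def carrier_mat_def by simp

lemma kron_unit_index:
  assumes "r < n*m" "a < n"
  shows "kron (unitv m i) (1\<^sub>m n) $$ (r,a) = (if r div n = i \<and> r mod n = a then 1 else 0)"
proof -
  have n0: "n > 0" using assms by auto
  have "r div n < m" using assms by (simp add: less_mult_imp_div_less mult.commute)
  moreover have "r mod n < n" using n0 by simp
  ultimately show ?thesis using assms unfolding kron_def unitv_def
    by (simp add: mult.commute)
qed

definition Lf :: "nat \<Rightarrow> (nat \<Rightarrow> nat \<Rightarrow> bool) \<Rightarrow> (nat \<Rightarrow> nat \<Rightarrow> real) \<Rightarrow> nat \<Rightarrow> nat \<Rightarrow> real" where
  "Lf m nbr W a b = (if a = b then (\<Sum>j\<in>nbhd m nbr a. W a j) else 0) - (if b \<in> nbhd m nbr a then W a b else 0)"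

definition Xf :: "nat \<Rightarrow> nat \<Rightarrow> (nat \<Rightarrow> nat \<Rightarrow> bool) \<Rightarrow> (nat \<Rightarrow> nat \<Rightarrow> real) \<Rightarrow> real mat" where
  "Xf n m nbr W = mat (n*m) (n*m) (\<lambda>(r,c). if r mod n = c mod n then Lf m nbr W (r div n) (c div n) else 0)"

lemma Xf_carrier: "Xf n m nbr W \<in> carrier_mat (n*m) (n*m)"
  unfolding Xf_def by simp

lemma Xf_mult:
  assumes Z: "Z \<in> carrier_mat (n*m) n"
    and Ze: "\<forall>r<n*m. \<forall>a<n. Z $$ (r,a) = (if r mod n = a then z (r div n) else 0)"
    and r: "r < n*m" and a: "a < n"
  shows "(Xf n m nbr W * Z) $$ (r,a) = (if r mod n = a then (\<Sum>b<m. Lf m nbr W (r div n) b * z b) else 0)"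
proof -
  have "(Xf n m nbr W * Z) $$ (r,a) = (\<Sum>c<m*n. Xf n m nbr W $$ (r,c) * Z $$ (c,a))"
    using Z r a Xf_carrier[of n m nbr W]
    by (simp add: scalar_prod_def atLeast0LessThan mult.commute)
  also have "\<dots> = (\<Sum>k<m. \<Sum>a'<n. Xf n m nbr W $$ (r,k*n+a') * Z $$ (k*n+a',a))"
    by (rule sum_group_div_mod)
  also have "\<dots> = (\<Sum>k<m. \<Sum>a'<n. (if r mod n = a' then Lf m nbr W (r div n) k else 0) * (if a' = a then z k else 0))"
  proof (intro sum.cong refl)
    fix k a' assume k: "k \<in> {..<m}" and a': "a' \<in> {..<n}"
    have lt: "k*n+a' < n*m"
    proof -
      have "k*n + a' < (k+1)*n" using a' by simp
      also have "(k+1)*n \<le> m*n" using k by (intro mult_le_mono1) auto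
      finally show ?thesis by (simp add: mult.commute)
    qed
    have dm: "(k*n+a') div n = k" "(k*n+a') mod n = a'" using a' by auto
    show "Xf n m nbr W $$ (r,k*n+a') * Z $$ (k*n+a',a) = (if r mod n = a' then Lf m nbr W (r div n) k else 0) * (if a' = a then z k else 0)"
      using lt r a Ze dm unfolding Xf_def by simp
  qed
  also have "\<dots> = (\<Sum>k<m. if r mod n = a then Lf m nbr W (r div n) k * z k else 0)"
  proof (intro sum.cong refl)
    fix k
    have "(\<Sum>a'<n. (if r mod n = a' then Lf m nbr W (r div n) k else 0) * (if a' = a then z k else 0))
        = (\<Sum>a'<n. if a' = a then (if r mod n = a then Lf m nbr W (r div n) k * z k else 0) else 0)"
      by (intro sum.cong refl) simp
    also have "\<dots> = (if r mod n = a then Lf m nbr W (r div n) k * z k else 0)" using a by simp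
    finally show "(\<Sum>a'<n. (if r mod n = a' then Lf m nbr W (r div n) k else 0) * (if a' = a then z k else 0))
        = (if r mod n = a then Lf m nbr W (r div n) k * z k else 0)" .
  qed
  also have "\<dots> = (if r mod n = a then (\<Sum>b<m. Lf m nbr W (r div n) b * z b) else 0)" by simp
  finally show ?thesis .
qed



definition polyfun :: "(real \<Rightarrow> real) \<Rightarrow> bool" where
  "polyfun f \<longleftrightarrow> (\<exists>p. \<forall>s. f s = poly p s)"

lemma polyfun_const[simp]: "polyfun (\<lambda>s. c)"
  unfolding polyfun_def by (rule exI[of _ "[:c:]"]) simp

lemma polyfun_id[simp]: "polyfun (\<lambda>s. s)"
  unfolding polyfun_def by (rule exI[of _ "[:0,1:]"]) simp

lemma polyfun_add: "polyfun f \<Longrightarrow> polyfun g \<Longrightarrow> polyfun (\<lambda>s. f s + g s)"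
  unfolding polyfun_def by (metis poly_add)

lemma polyfun_diff: "polyfun f \<Longrightarrow> polyfun g \<Longrightarrow> polyfun (\<lambda>s. f s - g s)"
  unfolding polyfun_def by (metis poly_diff)

lemma polyfun_mult: "polyfun f \<Longrightarrow> polyfun g \<Longrightarrow> polyfun (\<lambda>s. f s * g s)"
  unfolding polyfun_def by (metis poly_mult)

lemma polyfun_if: "polyfun f \<Longrightarrow> polyfun g \<Longrightarrow> polyfun (\<lambda>s. if b then f s else g s)"
  by (cases b) auto

lemma polyfun_sum:
  assumes "\<forall>i\<in>I. polyfun (f i)" shows "polyfun (\<lambda>s. \<Sum>i\<in>I. f i s)"
proof -
  from assms obtain P where P: "\<forall>i\<in>I. \<forall>s. f i s = poly (P i) s"
    unfolding polyfun_def by metis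
  have "\<forall>s. (\<Sum>i\<in>I. f i s) = poly (\<Sum>i\<in>I. P i) s"
    using P by (simp add: poly_sum)
  then show ?thesis unfolding polyfun_def by blast
qed

lemma polyfun_prod:
  assumes "\<forall>i\<in>I. polyfun (f i)" shows "polyfun (\<lambda>s. \<Prod>i\<in>I. f i s)"
proof -
  from assms obtain P where P: "\<forall>i\<in>I. \<forall>s. f i s = poly (P i) s"
    unfolding polyfun_def by metis
  have "\<forall>s. (\<Prod>i\<in>I. f i s) = poly (\<Prod>i\<in>I. P i) s"
    using P by (simp add: poly_prod)
  then show ?thesis unfolding polyfun_def by blast
qed

definition pmat :: "(real \<Rightarrow> real mat) \<Rightarrow> nat \<Rightarrow> nat \<Rightarrow> bool" where
  "pmat A nr nc \<longleftrightarrow> (\<forall>s. A s \<in> carrier_mat nr nc) \<and> (\<forall>i<nr. \<forall>j<nc. polyfun (\<lambda>s. A s $$ (i,j)))"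

lemma pmat_const: "A \<in> carrier_mat nr nc \<Longrightarrow> pmat (\<lambda>s. A) nr nc"
  unfolding pmat_def by simp

lemma pmat_add:
  assumes A: "pmat A nr nc" and B: "pmat B nr nc" shows "pmat (\<lambda>s. A s + B s) nr nc"
  unfolding pmat_def
proof (intro conjI allI impI)
  fix s show "A s + B s \<in> carrier_mat nr nc" using A B unfolding pmat_def by auto
next
  fix i j assume ij: "i < nr" "j < nc"
  have "(A s + B s) $$ (i,j) = A s $$ (i,j) + B s $$ (i,j)" for s
    using A B ij unfolding pmat_def by (metis carrier_matD index_add_mat(1))
  moreover have "polyfun (\<lambda>s. A s $$ (i,j) + B s $$ (i,j))"
    using A B ij unfolding pmat_def by (auto intro!: polyfun_add)
  ultimately show "polyfun (\<lambda>s. (A s + B s) $$ (i,j))" by simp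
qed

lemma pmat_smult:
  assumes c: "polyfun c" and A: "pmat A nr nc" shows "pmat (\<lambda>s. c s \<cdot>\<^sub>m A s) nr nc"
  unfolding pmat_def
proof (intro conjI allI impI)
  fix s show "c s \<cdot>\<^sub>m A s \<in> carrier_mat nr nc" using A unfolding pmat_def by auto
next
  fix i j assume ij: "i < nr" "j < nc"
  have "(c s \<cdot>\<^sub>m A s) $$ (i,j) = c s * A s $$ (i,j)" for s
    using A ij unfolding pmat_def by (metis carrier_matD index_smult_mat(1))
  moreover have "polyfun (\<lambda>s. c s * A s $$ (i,j))"
    using c A ij unfolding pmat_def by (auto intro!: polyfun_mult)
  ultimately show "polyfun (\<lambda>s. (c s \<cdot>\<^sub>m A s) $$ (i,j))" by simp
qed

lemma pmat_mult:
  assumes A: "pmat A nr k" and B: "pmat B k nc"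
  shows "pmat (\<lambda>s. A s * B s) nr nc"
  unfolding pmat_def
proof (intro conjI allI impI)
  fix s show "A s * B s \<in> carrier_mat nr nc" using A B unfolding pmat_def by (meson mult_carrier_mat)
next
  fix i j assume ij: "i < nr" "j < nc"
  have c: "A s \<in> carrier_mat nr k" "B s \<in> carrier_mat k nc" for s using A B unfolding pmat_def by auto
  have "(A s * B s) $$ (i,j) = (\<Sum>l\<in>{0..<k}. A s $$ (i,l) * B s $$ (l,j))" for s
    using c[of s] ij by (simp add: scalar_prod_def)
  moreover have "polyfun (\<lambda>s. \<Sum>l\<in>{0..<k}. A s $$ (i,l) * B s $$ (l,j))"
    using A B ij unfolding pmat_def by (auto intro!: polyfun_sum polyfun_mult)
  ultimately show "polyfun (\<lambda>s. (A s * B s) $$ (i,j))" by simp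
qed

lemma pmat_pow:
  assumes A: "pmat A N N" shows "pmat (\<lambda>s. A s ^\<^sub>m k) N N"
proof (induction k)
  case 0
  have c: "A s \<in> carrier_mat N N" for s using A unfolding pmat_def by auto
  have "(\<lambda>s. A s ^\<^sub>m 0) = (\<lambda>s. 1\<^sub>m N)"
  proof
    fix s have "dim_row (A s) = N" using c[of s] by blast
    then show "A s ^\<^sub>m 0 = 1\<^sub>m N" by simp
  qed
  then show ?case by (simp add: pmat_const)
next
  case (Suc k)
  have "pmat (\<lambda>s. A s ^\<^sub>m k * A s) N N" by (rule pmat_mult[OF Suc.IH A])
  then show ?case by simp
qed

lemma pmat_hcat:
  assumes F: "\<forall>k<K. pmat (F k) nr w"
  shows "pmat (\<lambda>s. hcat nr (map (\<lambda>k. F k s) [0..<K])) nr (K*w)"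
  unfolding pmat_def
proof (intro conjI allI impI)
  have c: "\<forall>M\<in>set (map (\<lambda>k. F k s) [0..<K]). M \<in> carrier_mat nr w" for s
    using F unfolding pmat_def by auto
  fix s show "hcat nr (map (\<lambda>k. F k s) [0..<K]) \<in> carrier_mat nr (K*w)"
    using hcat_carrier[OF c[of s]] by simp
next
  fix i j assume ij: "i < nr" "j < K*w"
  have c: "\<forall>M\<in>set (map (\<lambda>k. F k s) [0..<K]). M \<in> carrier_mat nr w" for s
    using F unfolding pmat_def by auto
  have w0: "w > 0" using ij by (cases "w = 0") auto
  have jd: "j div w < K" using ij by (simp add: less_mult_imp_div_less)
  have "hcat nr (map (\<lambda>k. F k s) [0..<K]) $$ (i,j) = F (j div w) s $$ (i, j mod w)" for s
    using hcat_index[OF c[of s], of i j] ij jd by simp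
  moreover have "polyfun (\<lambda>s. F (j div w) s $$ (i, j mod w))"
    using F jd ij w0 unfolding pmat_def by auto
  ultimately show "polyfun (\<lambda>s. hcat nr (map (\<lambda>k. F k s) [0..<K]) $$ (i,j))" by simp
qed

lemma polyfun_det:
  assumes A: "pmat A N N" shows "polyfun (\<lambda>s. det (A s))"
proof -
  have c: "A s \<in> carrier_mat N N" for s using A unfolding pmat_def by auto
  have "det (A s) = (\<Sum>p\<in>{p. p permutes {0..<N}}. signof p * (\<Prod>i=0..<N. A s $$ (i, p i)))" for s
    using c[of s] unfolding det_def by simp
  moreover have "polyfun (\<lambda>s. \<Sum>p\<in>{p. p permutes {0..<N}}. signof p * (\<Prod>i=0..<N. A s $$ (i, p i)))"
  proof (intro polyfun_sum ballI polyfun_mult polyfun_const polyfun_prod)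
    fix p i assume p: "p \<in> {p. p permutes {0..<N}}" and i: "i \<in> {0..<N}"
    then have "p i < N" using permutes_in_image[of p "{0..<N}" i] by auto
    then show "polyfun (\<lambda>s. A s $$ (i, p i))" using A i unfolding pmat_def by auto
  qed
  ultimately show ?thesis by simp
qed

lemma choose_point:
  fixes f :: "nat \<Rightarrow> real \<Rightarrow> real" and m :: nat
  assumes E: "finite E"
    and f: "\<forall>q<m. polyfun (f q) \<and> (\<exists>s. f q s \<noteq> 0)"
  shows "\<exists>s. s \<notin> E \<and> (\<forall>q<m. f q s \<noteq> 0)"
proof -
  from f obtain P where P: "\<forall>q<m. \<forall>s. f q s = poly (P q) s"
    unfolding polyfun_def by metis
  have P0: "P q \<noteq> 0" if "q < m" for q
    using P f that by fastforce
  define Z where "Z = E \<union> (\<Union>q<m. {s. poly (P q) s = 0})"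
  have "finite (\<Union>q<m. {s. poly (P q) s = 0})"
    using P0 poly_roots_finite by (intro finite_UN_I) auto
  then have "finite Z" unfolding Z_def using E by auto
  then obtain s where "s \<notin> Z" using ex_new_if_finite[OF infinite_UNIV_char_0] by blast
  then show ?thesis unfolding Z_def using P by auto
qed



lemma finite_nbhd6: "finite (nbhd m nbr a)"
  unfolding nbhd_def by simp

lemma Cij_carrier: "kron (transpose_mat (unitv m i) - transpose_mat (unitv m j)) (1\<^sub>m n) \<in> carrier_mat n (n*m)"
  unfolding kron_def unitv_def carrier_mat_def by (simp add: mult.commute)

lemma Cij_index:
  assumes b: "b < n" and c: "c < n*m"
  shows "kron (transpose_mat (unitv m i) - transpose_mat (unitv m j)) (1\<^sub>m n) $$ (b,c)
    = (if b = c mod n then (if c div n = i then 1 else 0) - (if c div n = j then 1 else 0) else 0)"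
proof -
  have n0: "n > 0" using b by simp
  have cd: "c div n < m" using c by (simp add: less_mult_imp_div_less mult.commute)
  have bd: "b div n = 0" "b mod n = b" using b by auto
  have cm: "c mod n < n" using n0 by simp
  show ?thesis using b c cd bd cm unfolding kron_def unitv_def
    by (simp add: mult.commute)
qed

lemma sum_nth_distinct:
  assumes "distinct xs"
  shows "(\<Sum>k<length xs. g (xs ! k)) = sum g (set xs)"
proof -
  have "sum g (set xs) = sum_list (map g xs)" using assms by (rule sum.distinct_set_conv_list)
  also have "\<dots> = (\<Sum>k<length xs. map g xs ! k)" by (simp add: sum_list_sum_nth atLeast0LessThan)
  finally show ?thesis by simp
qed

lemma G_index:
  fixes W :: "nat \<Rightarrow> nat \<Rightarrow> real"
  assumes dj: "distinct js" and b: "b < n" and c: "c < n*m"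
  shows "(hcat n (map (\<lambda>j. W i j \<cdot>\<^sub>m 1\<^sub>m n) js) *
          vcat (n*m) (map (\<lambda>j. kron (transpose_mat (unitv m i) - transpose_mat (unitv m j)) (1\<^sub>m n)) js)) $$ (b,c)
       = (if b = c mod n then (\<Sum>j\<in>set js. W i j * ((if c div n = i then 1 else 0) - (if c div n = j then 1 else 0))) else 0)"
proof -
  define L where "L = length js"
  define Hh where "Hh = hcat n (map (\<lambda>j. W i j \<cdot>\<^sub>m 1\<^sub>m n) js)"
  define Cc where "Cc = vcat (n*m) (map (\<lambda>j. kron (transpose_mat (unitv m i) - transpose_mat (unitv m j)) (1\<^sub>m n)) js)"
  have n0: "n > 0" using b by simp
  have hb: "\<forall>M\<in>set (map (\<lambda>j. W i j \<cdot>\<^sub>m 1\<^sub>m n) js). M \<in> carrier_mat n n" by auto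
  have cb: "\<forall>M\<in>set (map (\<lambda>j. kron (transpose_mat (unitv m i) - transpose_mat (unitv m j)) (1\<^sub>m n)) js). M \<in> carrier_mat n (n*m)"
    using Cij_carrier by auto
  have Hc: "Hh \<in> carrier_mat n (L*n)" unfolding Hh_def L_def using hcat_carrier[OF hb] by simp
  have Cc: "Cc \<in> carrier_mat (L*n) (n*m)" unfolding Cc_def L_def using vcat_carrier[OF cb] by simp
  have "(Hh * Cc) $$ (b,c) = (\<Sum>col<L*n. Hh $$ (b,col) * Cc $$ (col,c))"
    using Hc Cc b c by (simp add: scalar_prod_def atLeast0LessThan)
  also have "\<dots> = (\<Sum>k<L. \<Sum>a<n. Hh $$ (b,k*n+a) * Cc $$ (k*n+a,c))" by (rule sum_group_div_mod)
  also have "\<dots> = (\<Sum>k<L. W i (js!k) * ((if c div n = i then 1 else 0) - (if c div n = js!k then 1 else 0)) * (if b = c mod n then 1 else 0))"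
  proof (intro sum.cong refl)
    fix k assume k: "k \<in> {..<L}"
    have "(\<Sum>a<n. Hh $$ (b,k*n+a) * Cc $$ (k*n+a,c)) = (\<Sum>a<n. if a = b then W i (js!k) * ((if c div n = i then 1 else 0) - (if c div n = js!k then 1 else 0)) * (if b = c mod n then 1 else 0) else 0)"
    proof (intro sum.cong refl)
      fix a assume a: "a \<in> {..<n}"
      have lt: "k*n+a < L*n"
      proof -
        have "k*n + a < (k+1)*n" using a by simp
        also have "(k+1)*n \<le> L*n" using k by (intro mult_le_mono1) auto
        finally show ?thesis .
      qed
      have dm: "(k*n+a) div n = k" "(k*n+a) mod n = a" using a by auto
      have kl: "k < length js" using k L_def by simp
      have e1: "Hh $$ (b,k*n+a) = (if b = a then W i (js!k) else 0)"
        unfolding Hh_def using hcat_index[OF hb b, of "k*n+a"] lt dm b a kl unfolding L_def by simp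
      have e2: "Cc $$ (k*n+a,c) = kron (transpose_mat (unitv m i) - transpose_mat (unitv m (js!k))) (1\<^sub>m n) $$ (a,c)"
        unfolding Cc_def using vcat_index[OF cb, of "k*n+a" c] lt dm c kl unfolding L_def by simp
      show "Hh $$ (b,k*n+a) * Cc $$ (k*n+a,c) = (if a = b then W i (js!k) * ((if c div n = i then 1 else 0) - (if c div n = js!k then 1 else 0)) * (if b = c mod n then 1 else 0) else 0)"
        unfolding e1 e2 using Cij_index[of a n c m i "js!k"] a c by auto
    qed
    also have "\<dots> = W i (js!k) * ((if c div n = i then 1 else 0) - (if c div n = js!k then 1 else 0)) * (if b = c mod n then 1 else 0)"
      using b by (subst sum.delta) auto
    finally show "(\<Sum>a<n. Hh $$ (b,k*n+a) * Cc $$ (k*n+a,c)) = W i (js!k) * ((if c div n = i then 1 else 0) - (if c div n = js!k then 1 else 0)) * (if b = c mod n then 1 else 0)" .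
  qed
  also have "\<dots> = (\<Sum>k<L. W i (js!k) * ((if c div n = i then 1 else 0) - (if c div n = js!k then 1 else 0))) * (if b = c mod n then 1 else 0)"
    by (simp add: sum_distrib_right)
  also have "(\<Sum>k<L. W i (js!k) * ((if c div n = i then 1 else 0) - (if c div n = js!k then 1 else 0)))
      = (\<Sum>j\<in>set js. W i j * ((if c div n = i then 1 else 0) - (if c div n = j then 1 else 0)))"
    unfolding L_def by (rule sum_nth_distinct[OF dj])
  finally show ?thesis unfolding Hh_def Cc_def by simp
qed


lemma Bt_mult_index:
  assumes G: "G \<in> carrier_mat n (n*m)" and r: "r < n*m" and c: "c < n*m"
  shows "(kron (unitv m i) (1\<^sub>m n) * G) $$ (r,c) = (if r div n = i then G $$ (r mod n, c) else 0)"
proof -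
  have n0: "n > 0" using r by (cases "n = 0") auto
  have "(kron (unitv m i) (1\<^sub>m n) * G) $$ (r,c) = (\<Sum>a<n. kron (unitv m i) (1\<^sub>m n) $$ (r,a) * G $$ (a,c))"
    using kron_unit_carrier[of m i n] G r c by (simp add: scalar_prod_def atLeast0LessThan)
  also have "\<dots> = (\<Sum>a<n. if a = r mod n then (if r div n = i then G $$ (r mod n, c) else 0) else 0)"
    by (intro sum.cong refl) (auto simp: kron_unit_index[OF r])
  also have "\<dots> = (if r div n = i then G $$ (r mod n, c) else 0)" using n0 by (subst sum.delta) auto
  finally show ?thesis .
qed

lemma Lf_alt:
  fixes W :: "nat \<Rightarrow> nat \<Rightarrow> real"
  shows "(\<Sum>j\<in>nbhd m nbr a. W a j * ((if c' = a then 1 else 0) - (if c' = j then 1 else 0))) = Lf m nbr W a c'"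
proof -
  have f: "finite (nbhd m nbr a)" unfolding nbhd_def by simp
  have "(\<Sum>j\<in>nbhd m nbr a. W a j * ((if c' = a then 1 else 0) - (if c' = j then 1 else 0)))
      = (\<Sum>j\<in>nbhd m nbr a. (if c' = a then W a j else 0)) - (\<Sum>j\<in>nbhd m nbr a. (if c' = j then W a j else 0))"
    by (subst sum_subtractf[symmetric], rule sum.cong) auto
  also have "\<dots> = Lf m nbr W a c'" unfolding Lf_def using f by (auto simp: sum.delta)
  finally show ?thesis .
qed

lemma msum_block:
  fixes W :: "nat \<Rightarrow> nat \<Rightarrow> real"
  assumes n0: "n > 0"
  shows "msum (n*m) (n*m) (\<lambda>i. kron (unitv m i) (1\<^sub>m n) *
      (hcat n (map (\<lambda>j. W i j \<cdot>\<^sub>m 1\<^sub>m n) (sorted_list_of_set (nbhd m nbr i))) *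
       vcat (n*m) (map (\<lambda>j. kron (transpose_mat (unitv m i) - transpose_mat (unitv m j)) (1\<^sub>m n)) (sorted_list_of_set (nbhd m nbr i))))) {..<m}
    = Xf n m nbr W"
proof (rule eq_matI)
  fix r c assume r: "r < dim_row (Xf n m nbr W)" and c: "c < dim_col (Xf n m nbr W)"
  then have r: "r < n*m" and c: "c < n*m" by (simp_all add: Xf_def)
  define G where "G = (\<lambda>i. hcat n (map (\<lambda>j. W i j \<cdot>\<^sub>m 1\<^sub>m n) (sorted_list_of_set (nbhd m nbr i))) *
       vcat (n*m) (map (\<lambda>j. kron (transpose_mat (unitv m i) - transpose_mat (unitv m j)) (1\<^sub>m n)) (sorted_list_of_set (nbhd m nbr i))))"
  have Gc: "G i \<in> carrier_mat n (n*m)" for i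
  proof -
    let ?js = "sorted_list_of_set (nbhd m nbr i)"
    have hb: "\<forall>M\<in>set (map (\<lambda>j. W i j \<cdot>\<^sub>m 1\<^sub>m n) ?js). M \<in> carrier_mat n n" by auto
    have cb: "\<forall>M\<in>set (map (\<lambda>j. kron (transpose_mat (unitv m i) - transpose_mat (unitv m j)) (1\<^sub>m n)) ?js). M \<in> carrier_mat n (n*m)"
      using Cij_carrier by auto
    show ?thesis unfolding G_def using hcat_carrier[OF hb] vcat_carrier[OF cb] by (metis length_map mult_carrier_mat)
  qed
  have rd: "r div n < m" using r by (simp add: less_mult_imp_div_less mult.commute)
  have rm: "r mod n < n" using n0 by simp
  have "msum (n*m) (n*m) (\<lambda>i. kron (unitv m i) (1\<^sub>m n) * G i) {..<m} $$ (r,c)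
      = (\<Sum>i<m. (kron (unitv m i) (1\<^sub>m n) * G i) $$ (r,c))"
    using r c by (simp add: msum_def)
  also have "\<dots> = (\<Sum>i<m. if i = r div n then G (r div n) $$ (r mod n, c) else 0)"
    by (intro sum.cong refl) (auto simp: Bt_mult_index[OF Gc r c])
  also have "\<dots> = G (r div n) $$ (r mod n, c)" using rd by (subst sum.delta) auto
  also have "\<dots> = (if r mod n = c mod n then (\<Sum>j\<in>nbhd m nbr (r div n). W (r div n) j * ((if c div n = r div n then 1 else 0) - (if c div n = j then 1 else 0))) else 0)"
    unfolding G_def
    by (subst G_index[OF _ rm c]) (simp_all add: finite_nbhd6)
  also have "\<dots> = Xf n m nbr W $$ (r,c)"
    unfolding Lf_alt using r c by (simp add: Xf_def)
  finally show "msum (n*m) (n*m) (\<lambda>i. kron (unitv m i) (1\<^sub>m n) *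
      (hcat n (map (\<lambda>j. W i j \<cdot>\<^sub>m 1\<^sub>m n) (sorted_list_of_set (nbhd m nbr i))) *
       vcat (n*m) (map (\<lambda>j. kron (transpose_mat (unitv m i) - transpose_mat (unitv m j)) (1\<^sub>m n)) (sorted_list_of_set (nbhd m nbr i))))) {..<m} $$ (r,c)
    = Xf n m nbr W $$ (r,c)" unfolding G_def .
qed (simp_all add: msum_def Xf_def)



context vec_space
begin
lemma rank_le_nr:
  assumes "A \<in> carrier_mat n nc" shows "rank A \<le> n"
proof -
  have sub: "VectorSpace.subspace class_ring (span (set (cols A))) V"
    using span_is_subspace assms cols_dim carrier_matD by (metis carrier_vecD carrier_vecI subsetI)
  have "vectorspace.dim class_ring (vs (span (set (cols A)))) \<le> dim"
    by (rule subspace_dim[OF sub fin_dim fin_dim_span_cols[OF assms]])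
  then show ?thesis unfolding rank_def dim_is_n by simp
qed
end

lemma pick_lessThan: "(j::nat) < N \<Longrightarrow> pick {..<N} j = j"
proof -
  assume j: "j < N"
  have "{a \<in> {..<N}. a < j} = {..<j}" using j by (auto intro: less_trans)
  then have "card {a \<in> {..<N}. a < j} = j" by simp
  then show ?thesis using pick_card_in_set[of j "{..<N}"] j by simp
qed

lemma ctrb_carrier:
  assumes F: "F \<in> carrier_mat N N" and G: "G \<in> carrier_mat N n"
  shows "ctrb_mat F G k \<in> carrier_mat N (k*n)"
proof -
  have "\<forall>M\<in>set (map (\<lambda>l. F ^\<^sub>m l * G) [0..<k]). M \<in> carrier_mat N n" using F G by auto
  from hcat_carrier[OF this] show ?thesis unfolding ctrb_mat_def using F by simp
qed

lemma ctrb_index: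
  assumes F: "F \<in> carrier_mat N N" and G: "G \<in> carrier_mat N n" and i: "i < N" and j: "j < k*n"
  shows "ctrb_mat F G k $$ (i,j) = (F ^\<^sub>m (j div n) * G) $$ (i, j mod n)"
proof -
  have c: "\<forall>M\<in>set (map (\<lambda>l. F ^\<^sub>m l * G) [0..<k]). M \<in> carrier_mat N n" using F G by auto
  have "j div n < k" using j by (simp add: less_mult_imp_div_less)
  then show ?thesis unfolding ctrb_mat_def using hcat_index[OF c, of i j] F i j by simp
qed

lemma ctrb_conclude:
  assumes F: "F \<in> carrier_mat (n*m) (n*m)" and G: "G \<in> carrier_mat (n*m) n" and n0: "n > 0" and m0: "m > 0"
    and d: "det (ctrb_mat F G m) \<noteq> 0"
  shows "controllable F G \<and> controllability_index F G = m"
proof -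
  define N where "N = n*m"
  have F': "F \<in> carrier_mat N N" and G': "G \<in> carrier_mat N n" using F G N_def by auto
  have dr: "dim_row F = N" using F' by simp
  have cm: "ctrb_mat F G m \<in> carrier_mat N N"
    using ctrb_carrier[OF F' G', of m] N_def by (simp add: mult.commute)
  have rm: "mrank (ctrb_mat F G m) = N"
    unfolding mrank_def using vec_space.det_rank_iff[OF cm] d cm by simp
  have lt: "mrank (ctrb_mat F G k) \<noteq> N" if "k < m" for k
  proof -
    have "mrank (ctrb_mat F G k) \<le> k*n"
      unfolding mrank_def using vec_space.rank_le_nc[OF ctrb_carrier[OF F' G', of k]] ctrb_carrier[OF F' G', of k] by simp
    moreover have "k*n < N" unfolding N_def using that n0 by simp
    ultimately show ?thesis by simp
  qed
  have idx: "controllability_index F G = m"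
    unfolding controllability_index_def dr
  proof (rule Least_equality)
    show "mrank (ctrb_mat F G m) = N" by (rule rm)
    fix k assume "mrank (ctrb_mat F G k) = N"
    show "m \<le> k"
    proof (rule ccontr)
      assume "\<not> m \<le> k"
      then have "k < m" by simp
      from lt[OF this] \<open>mrank (ctrb_mat F G k) = N\<close> show False by simp
    qed
  qed
  define A where "A = ctrb_mat F G N"
  have Ac: "A \<in> carrier_mat N (N*n)" unfolding A_def by (rule ctrb_carrier[OF F' G'])
  have NN: "N \<le> N*n" using n0 by simp
  have sub: "submatrix A UNIV {..<N} = ctrb_mat F G m"
  proof (rule eq_matI)
    have c1: "card {i. i < dim_row A \<and> i \<in> UNIV} = N" using Ac by simp
    have "{j. j < dim_col A \<and> j \<in> {..<N}} = {..<N}" using Ac NN by (auto intro: less_le_trans)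
    then have c2: "card {j. j < dim_col A \<and> j \<in> {..<N}} = N" by simp
    show "dim_row (submatrix A UNIV {..<N}) = dim_row (ctrb_mat F G m)" using c1 cm by (simp add: dim_submatrix)
    show "dim_col (submatrix A UNIV {..<N}) = dim_col (ctrb_mat F G m)" using c2 cm by (simp add: dim_submatrix)
    fix i j assume i: "i < dim_row (ctrb_mat F G m)" and j: "j < dim_col (ctrb_mat F G m)"
    then have i: "i < N" and j: "j < N" using cm by auto
    have "submatrix A UNIV {..<N} $$ (i,j) = A $$ (i,j)"
      using submatrix_index[of i A UNIV j "{..<N}"] c1 c2 i j by (simp add: pick_UNIV pick_lessThan)
    also have "\<dots> = (F ^\<^sub>m (j div n) * G) $$ (i, j mod n)"
      unfolding A_def using ctrb_index[OF F' G' i, of j N] j NN by simp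
    also have "\<dots> = ctrb_mat F G m $$ (i,j)"
      using ctrb_index[OF F' G' i, of j m] j N_def by (simp add: mult.commute)
    finally show "submatrix A UNIV {..<N} $$ (i,j) = ctrb_mat F G m $$ (i,j)" .
  qed
  have "card {j. j < N*n \<and> j \<in> {..<N}} \<le> vec_space.rank N A"
    using vec_space.rank_gt_minor[OF Ac, of UNIV "{..<N}"] sub d by simp
  moreover have "{j. j < N*n \<and> j \<in> {..<N}} = {..<N}" using NN by (auto intro: less_le_trans)
  ultimately have "N \<le> vec_space.rank N A" by simp
  moreover have "vec_space.rank N A \<le> N" using vec_space.rank_le_nr[OF Ac] .
  ultimately have "mrank A = N" unfolding mrank_def using Ac by simp
  then have "controllable F G" unfolding controllable_def A_def dr by simp
  with idx show ?thesis by simp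
qed



lemma smult_pow_mat:
  fixes Z :: "real mat" and t :: real
  assumes Z: "Z \<in> carrier_mat N N"
  shows "(t \<cdot>\<^sub>m Z) ^\<^sub>m k = (t ^ k) \<cdot>\<^sub>m (Z ^\<^sub>m k)"
proof (induction k)
  case 0 then show ?case using Z by (auto intro!: eq_matI)
next
  case (Suc k)
  have "(t \<cdot>\<^sub>m Z) ^\<^sub>m Suc k = ((t ^ k) \<cdot>\<^sub>m (Z ^\<^sub>m k)) * (t \<cdot>\<^sub>m Z)" using Suc by simp
  also have "\<dots> = (t ^ k) \<cdot>\<^sub>m ((Z ^\<^sub>m k) * (t \<cdot>\<^sub>m Z))"
    using Z by (intro mult_smult_assoc_mat) auto
  also have "(Z ^\<^sub>m k) * (t \<cdot>\<^sub>m Z) = t \<cdot>\<^sub>m (Z ^\<^sub>m k * Z)"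
    using Z by (intro mult_smult_distrib) auto
  also have "(t ^ k) \<cdot>\<^sub>m (t \<cdot>\<^sub>m (Z ^\<^sub>m k * Z)) = (t ^ Suc k) \<cdot>\<^sub>m (Z ^\<^sub>m k * Z)"
    by (rule eq_matI) auto
  finally show ?case by simp
qed

lemma scale_det:
  fixes Z B :: "real mat"
  assumes Z: "Z \<in> carrier_mat N N" and B: "B \<in> carrier_mat N n" and N: "N = n*m" and n0: "n > 0" and t: "t \<noteq> 0"
    and d: "det (hcat N (map (\<lambda>k. Z ^\<^sub>m k * B) [0..<m])) \<noteq> 0"
  shows "det (hcat N (map (\<lambda>k. (t \<cdot>\<^sub>m Z) ^\<^sub>m k * B) [0..<m])) \<noteq> 0"
proof -
  define M0 where "M0 = hcat N (map (\<lambda>k. Z ^\<^sub>m k * B) [0..<m])"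
  define M1 where "M1 = hcat N (map (\<lambda>k. (t \<cdot>\<^sub>m Z) ^\<^sub>m k * B) [0..<m])"
  have c0: "\<forall>M\<in>set (map (\<lambda>k. Z ^\<^sub>m k * B) [0..<m]). M \<in> carrier_mat N n" using Z B by auto
  have c1: "\<forall>M\<in>set (map (\<lambda>k. (t \<cdot>\<^sub>m Z) ^\<^sub>m k * B) [0..<m]). M \<in> carrier_mat N n" using Z B by auto
  have M0c: "M0 \<in> carrier_mat N N" unfolding M0_def using hcat_carrier[OF c0] N by (simp add: mult.commute)
  have M1c: "M1 \<in> carrier_mat N N" unfolding M1_def using hcat_carrier[OF c1] N by (simp add: mult.commute)
  have e: "M1 $$ (r,j) = t ^ (j div n) * M0 $$ (r,j)" if r: "r < N" and j: "j < N" for r j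
  proof -
    have jl: "j < length [0..<m] * n" using j N by (simp add: mult.commute)
    have jd: "j div n < m" using jl by (simp add: less_mult_imp_div_less)
    have "M1 $$ (r,j) = ((t \<cdot>\<^sub>m Z) ^\<^sub>m (j div n) * B) $$ (r, j mod n)"
      unfolding M1_def using hcat_index[OF c1 r] jl jd by simp
    also have "(t \<cdot>\<^sub>m Z) ^\<^sub>m (j div n) * B = (t ^ (j div n)) \<cdot>\<^sub>m (Z ^\<^sub>m (j div n) * B)"
      unfolding smult_pow_mat[OF Z] using Z B by (intro mult_smult_assoc_mat) auto
    also have "((t ^ (j div n)) \<cdot>\<^sub>m (Z ^\<^sub>m (j div n) * B)) $$ (r, j mod n) = t ^ (j div n) * (Z ^\<^sub>m (j div n) * B) $$ (r, j mod n)"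
      using Z B r n0 by simp
    also have "(Z ^\<^sub>m (j div n) * B) $$ (r, j mod n) = M0 $$ (r,j)"
      unfolding M0_def using hcat_index[OF c0 r] jl jd by simp
    finally show ?thesis .
  qed
  have "\<not> (\<exists>v. v \<in> carrier_vec N \<and> v \<noteq> 0\<^sub>v N \<and> M1 *\<^sub>v v = 0\<^sub>v N)"
  proof
    assume "\<exists>v. v \<in> carrier_vec N \<and> v \<noteq> 0\<^sub>v N \<and> M1 *\<^sub>v v = 0\<^sub>v N"
    then obtain v where v: "v \<in> carrier_vec N" "v \<noteq> 0\<^sub>v N" "M1 *\<^sub>v v = 0\<^sub>v N" by blast
    define w where "w = vec N (\<lambda>j. t ^ (j div n) * v $ j)"
    have wc: "w \<in> carrier_vec N" unfolding w_def by simp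
    have "M0 *\<^sub>v w = 0\<^sub>v N"
    proof (rule eq_vecI)
      fix r assume "r < dim_vec (0\<^sub>v N :: real vec)"
      then have r: "r < N" by simp
      have "(M0 *\<^sub>v w) $ r = (\<Sum>j<N. M0 $$ (r,j) * w $ j)"
        using M0c wc r by (simp add: scalar_prod_def atLeast0LessThan)
      also have "\<dots> = (\<Sum>j<N. M1 $$ (r,j) * v $ j)"
        by (intro sum.cong refl) (simp add: w_def e[OF r])
      also have "\<dots> = (M1 *\<^sub>v v) $ r"
        using M1c v(1) r by (simp add: scalar_prod_def atLeast0LessThan)
      also have "\<dots> = 0" using v(3) r by simp
      finally show "(M0 *\<^sub>v w) $ r = 0\<^sub>v N $ r" using r by simp
    next
      show "dim_vec (M0 *\<^sub>v w) = dim_vec (0\<^sub>v N :: real vec)" using M0c by simp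
    qed
    moreover have "w \<noteq> 0\<^sub>v N"
    proof
      assume w0: "w = 0\<^sub>v N"
      have "v = 0\<^sub>v N"
      proof (rule eq_vecI)
        fix j assume "j < dim_vec (0\<^sub>v N :: real vec)"
        then have j: "j < N" by simp
        have "t ^ (j div n) * v $ j = 0" using arg_cong[OF w0, of "\<lambda>x. x $ j"] j unfolding w_def by simp
        then show "v $ j = 0\<^sub>v N $ j" using t j by simp
      next
        show "dim_vec v = dim_vec (0\<^sub>v N :: real vec)" using v by simp
      qed
      with v(2) show False by simp
    qed
    ultimately have "det M0 = 0" using det_0_iff_vec_prod_zero_field[OF M0c] wc by blast
    then show False using d unfolding M0_def by simp
  qed
  then show ?thesis using det_0_iff_vec_prod_zero_field[OF M1c] unfolding M1_def by blast
qed

lemma bfs_tree: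
  assumes sc: "strongly_connected m nbr" and q: "q < m"
  shows "\<exists>par rk :: nat \<Rightarrow> nat. \<forall>a<m. a \<noteq> q \<longrightarrow> par a < m \<and> nbr a (par a) \<and> par a \<noteq> a \<and> rk (par a) < rk a"
proof -
  define R where "R = neighbor_arcs m nbr"
  define rk where "rk = (\<lambda>a. LEAST l. (q,a) \<in> R ^^ l)"
  have ex: "\<exists>p. a < m \<and> a \<noteq> q \<longrightarrow> p < m \<and> nbr a p \<and> p \<noteq> a \<and> rk p < rk a" for a
  proof (cases "a < m \<and> a \<noteq> q")
    case False then show ?thesis by blast
  next
    case True
    then have "(q,a) \<in> R\<^sup>*" using sc q unfolding strongly_connected_def R_def by blast
    then obtain l where "(q,a) \<in> R ^^ l" using rtrancl_power by blast
    then have ra: "(q,a) \<in> R ^^ rk a" unfolding rk_def by (rule LeastI)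
    have "rk a \<noteq> 0"
    proof
      assume "rk a = 0"
      then show False using ra True by simp
    qed
    then obtain l' where l': "rk a = Suc l'" by (cases "rk a") auto
    then have "(q,a) \<in> R ^^ l' O R" using ra by simp
    then obtain p where p: "(q,p) \<in> R ^^ l'" "(p,a) \<in> R" by blast
    have "rk p \<le> l'" unfolding rk_def using p(1) by (rule Least_le)
    then have rp: "rk p < rk a" using l' by simp
    have "p < m" "nbr a p" using p(2) unfolding R_def neighbor_arcs_def by auto
    moreover have "p \<noteq> a" using rp by auto
    ultimately show ?thesis using rp by blast
  qed
  then obtain par where "\<forall>a. a < m \<and> a \<noteq> q \<longrightarrow> par a < m \<and> nbr a (par a) \<and> par a \<noteq> a \<and> rk (par a) < rk a"
    by metis
  then show ?thesis by blast
qed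



definition Wt :: "nat \<Rightarrow> (nat \<Rightarrow> nat) \<Rightarrow> nat \<Rightarrow> nat \<Rightarrow> real" where
  "Wt q par a j = (if a \<noteq> q \<and> j = par a then real a + 1 else 0)"

lemma finite_nbhd: "finite (nbhd m nbr a)"
  unfolding nbhd_def by simp

lemma witness_det:
  fixes par rk :: "nat \<Rightarrow> nat"
  assumes n0: "n > 0" and q: "q < m"
    and tree: "\<forall>a<m. a \<noteq> q \<longrightarrow> par a < m \<and> nbr a (par a) \<and> par a \<noteq> a \<and> rk (par a) < rk a"
  shows "det (hcat (n*m) (map (\<lambda>k. Xf n m nbr (Wt q par) ^\<^sub>m k * kron (unitv m q) (1\<^sub>m n)) [0..<m])) \<noteq> 0"
proof -
  define dd where "dd = (\<lambda>a::nat. if a = q then 0 else real a + 1)"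
  define ll where "ll = (\<lambda>a::nat. - (real a + 1))"
  interpret T: treeop dd ll par q rk .
  define S where "S = {..<m}"
  define W where "W = Wt q par"
  define X where "X = Xf n m nbr W"
  define Bq where "Bq = kron (unitv m q) (1\<^sub>m n)"
  define V where "V = (\<lambda>k. (T.opT S ^^ k) T.delta)"
  have Xc: "X \<in> carrier_mat (n*m) (n*m)" unfolding X_def by (rule Xf_carrier)
  have Bc: "Bq \<in> carrier_mat (n*m) n" unfolding Bq_def by (rule kron_unit_carrier)
  have L1: "(\<Sum>b<m. Lf m nbr W a b * z b) = T.opT S z a" if a: "a < m" for a z
  proof (cases "a = q")
    case True
    then have "Lf m nbr W a b = 0" for b unfolding Lf_def W_def Wt_def by simp
    then show ?thesis using True a unfolding T.opT_def unfolding dd_def S_def by simp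
  next
    case False
    have pa: "par a < m" "nbr a (par a)" "par a \<noteq> a" using tree a False by auto
    then have pN: "par a \<in> nbhd m nbr a" unfolding nbhd_def by auto
    have s1: "(\<Sum>j\<in>nbhd m nbr a. W a j) = real a + 1"
      unfolding W_def Wt_def using False pN finite_nbhd[of m nbr a] by simp
    have "Lf m nbr W a b = (if a = b then real a + 1 else 0) - (if b = par a then real a + 1 else 0)" for b
      unfolding Lf_def s1 using pN False by (auto simp: W_def Wt_def)
    then have "(\<Sum>b<m. Lf m nbr W a b * z b) = (\<Sum>b<m. (if a = b then (real a + 1) * z b else 0) - (if b = par a then (real a + 1) * z b else 0))"
      by (intro sum.cong refl) (simp add: left_diff_distrib)
    also have "\<dots> = (real a + 1) * z a - (real a + 1) * z (par a)"
      using a pa by (simp add: sum_subtractf)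
    finally show ?thesis using a False unfolding T.opT_def unfolding dd_def ll_def S_def by (simp add: algebra_simps)
  qed
  have L2: "V k b = 0" if "b \<ge> m" for k b
  proof (cases k)
    case 0 then show ?thesis using that q unfolding V_def T.delta_def by auto
  next
    case (Suc k') then show ?thesis using that unfolding V_def S_def by (simp add: T.opT_supp)
  qed
  have L3: "X ^\<^sub>m k * Bq \<in> carrier_mat (n*m) n \<and>
      (\<forall>r<n*m. \<forall>a<n. (X ^\<^sub>m k * Bq) $$ (r,a) = (if r mod n = a then V k (r div n) else 0))" for k
  proof (induction k)
    case 0
    have e: "X ^\<^sub>m 0 * Bq = Bq" using Xc Bc by simp
    show ?case unfolding e unfolding Bq_def V_def T.delta_def using kron_unit_carrier
      by (auto simp: kron_unit_index)
  next
    case (Suc k)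
    have eq: "X ^\<^sub>m Suc k * Bq = X * (X ^\<^sub>m k * Bq)"
    proof -
      have "X ^\<^sub>m Suc k * Bq = (X * X ^\<^sub>m k) * Bq" using pow_mat_Suc'[OF Xc] by simp
      also have "\<dots> = X * (X ^\<^sub>m k * Bq)" using Xc Bc by (intro assoc_mult_mat) auto
      finally show ?thesis .
    qed
    have c: "X * (X ^\<^sub>m k * Bq) \<in> carrier_mat (n*m) n" using mult_carrier_mat[OF Xc conjunct1[OF Suc.IH]] .
    have "(X * (X ^\<^sub>m k * Bq)) $$ (r,a) = (if r mod n = a then V (Suc k) (r div n) else 0)"
      if r: "r < n*m" and a: "a < n" for r a
    proof -
      have "(X * (X ^\<^sub>m k * Bq)) $$ (r,a) = (if r mod n = a then (\<Sum>b<m. Lf m nbr W (r div n) b * V k b) else 0)"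
        using Xf_mult[OF conjunct1[OF Suc.IH] conjunct2[OF Suc.IH] r a, of nbr W] unfolding X_def .
      moreover have "r div n < m" using r by (simp add: less_mult_imp_div_less mult.commute)
      ultimately show ?thesis using L1[of "r div n" "V k"] unfolding V_def by simp
    qed
    then show ?case using eq c by simp
  qed
  define M where "M = hcat (n*m) (map (\<lambda>k. X ^\<^sub>m k * Bq) [0..<m])"
  have allc: "\<forall>N\<in>set (map (\<lambda>k. X ^\<^sub>m k * Bq) [0..<m]). N \<in> carrier_mat (n*m) n" using L3 by auto
  have Mc: "M \<in> carrier_mat (n*m) (n*m)"
    unfolding M_def using hcat_carrier[OF allc] by (simp add: mult.commute)
  have Me: "M $$ (r,j) = (if r mod n = j mod n then V (j div n) (r div n) else 0)"
    if "r < n*m" "j < n*m" for r j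
  proof -
    have "j div n < m" using that by (simp add: less_mult_imp_div_less mult.commute)
    then show ?thesis unfolding M_def using hcat_index[OF allc, of r j] that L3[of "j div n"] n0
      by (simp add: mult.commute)
  qed
  have "\<not> (\<exists>v. v \<in> carrier_vec (n*m) \<and> v \<noteq> 0\<^sub>v (n*m) \<and> M *\<^sub>v v = 0\<^sub>v (n*m))"
  proof
    assume "\<exists>v. v \<in> carrier_vec (n*m) \<and> v \<noteq> 0\<^sub>v (n*m) \<and> M *\<^sub>v v = 0\<^sub>v (n*m)"
    then obtain v where v: "v \<in> carrier_vec (n*m)" "v \<noteq> 0\<^sub>v (n*m)" "M *\<^sub>v v = 0\<^sub>v (n*m)" by blast
    have row: "(\<Sum>k<m. V k (r div n) * v $ (k*n + r mod n)) = 0" if r: "r < n*m" for r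
    proof -
      have "0 = (M *\<^sub>v v) $ r" using v r by simp
      also have "\<dots> = (\<Sum>j<m*n. M $$ (r,j) * v $ j)"
        using Mc v(1) r by (simp add: scalar_prod_def atLeast0LessThan mult.commute)
      also have "\<dots> = (\<Sum>k<m. \<Sum>a<n. M $$ (r,k*n+a) * v $ (k*n+a))" by (rule sum_group_div_mod)
      also have "\<dots> = (\<Sum>k<m. \<Sum>a<n. if a = r mod n then V k (r div n) * v $ (k*n + r mod n) else 0)"
      proof (intro sum.cong refl)
        fix k a assume k: "k \<in> {..<m}" and a: "a \<in> {..<n}"
        have lt: "k*n+a < n*m"
        proof -
          have "k*n + a < (k+1)*n" using a by simp
          also have "(k+1)*n \<le> m*n" using k by (intro mult_le_mono1) auto
          finally show ?thesis by (simp add: mult.commute)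
        qed
        have dm: "(k*n+a) div n = k" "(k*n+a) mod n = a" using a by auto
        show "M $$ (r,k*n+a) * v $ (k*n+a) = (if a = r mod n then V k (r div n) * v $ (k*n + r mod n) else 0)"
          using Me[OF r lt] dm by auto
      qed
      also have "\<dots> = (\<Sum>k<m. V k (r div n) * v $ (k*n + r mod n))" using n0 by simp
      finally show ?thesis by simp
    qed
    have g0: "v $ (k*n + a) = 0" if a: "a < n" and k: "k < m" for a k
    proof -
      have z: "\<forall>b. (\<Sum>i<m. v $ (i*n + a) * (T.opT S ^^ i) T.delta b) = 0"
      proof
        fix b
        show "(\<Sum>i<m. v $ (i*n + a) * (T.opT S ^^ i) T.delta b) = 0"
        proof (cases "b < m")
          case True
          have lt: "b*n + a < n*m"
          proof -
            have "b*n + a < (b+1)*n" using a by simp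
            also have "(b+1)*n \<le> m*n" using True by (intro mult_le_mono1) auto
            finally show ?thesis by (simp add: mult.commute)
          qed
          have "(b*n+a) div n = b" "(b*n+a) mod n = a" using a by auto
          then show ?thesis using row[OF lt] unfolding V_def by (simp add: mult.commute)
        next
          case False
          then show ?thesis using L2 unfolding V_def by simp
        qed
      qed
      have dc: "T.downclosed S" unfolding T.downclosed_def S_def using q tree by auto
      have tr: "\<forall>k\<in>S. k \<noteq> q \<longrightarrow> rk (par k) < rk k \<and> ll k \<noteq> 0"
        unfolding S_def ll_def using tree by auto
      have inj: "inj_on dd S" unfolding inj_on_def dd_def by auto
      have "\<forall>i<m. v $ (i*n + a) = 0"
        by (rule T.tree_krylov[OF _ dc tr inj _ z]) (auto simp: S_def)
      then show ?thesis using k by blast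
    qed
    have "v = 0\<^sub>v (n*m)"
    proof (rule eq_vecI)
      fix j assume "j < dim_vec (0\<^sub>v (n*m) :: real vec)"
      then have j: "j < n*m" by simp
      have "j div n < m" using j by (simp add: less_mult_imp_div_less mult.commute)
      moreover have "j mod n < n" using n0 by simp
      ultimately have "v $ ((j div n)*n + j mod n) = 0" using g0 by blast
      then show "v $ j = 0\<^sub>v (n*m) $ j" using j by simp
    next
      show "dim_vec v = dim_vec (0\<^sub>v (n*m) :: real vec)" using v by simp
    qed
    then show False using v by simp
  qed
  then have "det M \<noteq> 0" using det_0_iff_vec_prod_zero_field[OF Mc] by blast
  then show ?thesis unfolding M_def X_def Bq_def W_def .
qed



lemma polyfun_div_const: "polyfun f \<Longrightarrow> polyfun (\<lambda>s. f s / c)"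
  unfolding polyfun_def by (metis divide_inverse mult.commute poly_smult)

lemma lin_block:
  fixes Bt P H0 Ct :: "real mat"
  assumes Bt: "Bt \<in> carrier_mat N n" and P: "P \<in> carrier_mat n N" and H0: "H0 \<in> carrier_mat n L"
    and Ct: "Ct \<in> carrier_mat L N"
  shows "Bt * (P + (t \<cdot>\<^sub>m H0) * Ct) = Bt * P + t \<cdot>\<^sub>m (Bt * (H0 * Ct))"
proof -
  have "(t \<cdot>\<^sub>m H0) * Ct = t \<cdot>\<^sub>m (H0 * Ct)" using H0 Ct by (rule mult_smult_assoc_mat)
  moreover have "Bt * (P + t \<cdot>\<^sub>m (H0 * Ct)) = Bt * P + Bt * (t \<cdot>\<^sub>m (H0 * Ct))"
    using Bt P H0 Ct by (intro mult_add_distrib_mat) auto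
  moreover have "Bt * (t \<cdot>\<^sub>m (H0 * Ct)) = t \<cdot>\<^sub>m (Bt * (H0 * Ct))"
    using Bt H0 Ct by (intro mult_smult_distrib) auto
  ultimately show ?thesis by simp
qed

lemma lag_val:
  assumes "p < m" "q < m"
  shows "(\<Prod>p'\<in>{..<m}-{p}. (real q - real p') / (real p - real p')) = (if p = q then 1 else 0)"
proof (cases "p = q")
  case True
  then show ?thesis by (intro trans[OF prod.neutral]) auto
next
  case False
  then have "q \<in> {..<m}-{p}" using assms by auto
  then have "(\<Prod>p'\<in>{..<m}-{p}. (real q - real p') / (real p - real p')) = 0"
    by (intro prod_zero) auto
  then show ?thesis using False by simp
qed

theorem lemma5:
  fixes n m :: nat and A :: "real mat"
    and B C F K :: "nat \<Rightarrow> real mat" and p q :: "nat \<Rightarrow> nat"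
    and nbr :: "nat \<Rightarrow> nat \<Rightarrow> bool"
  assumes n_pos: "n \<ge> 1" and m_pos: "m \<ge> 1"
    and A_dim: "A \<in> carrier_mat n n"
    and B_dim: "\<forall>i<m. B i \<in> carrier_mat n (p i)"
    and C_dim: "\<forall>i<m. C i \<in> carrier_mat (q i) n"
    and F_dim: "\<forall>i<m. F i \<in> carrier_mat (p i) n"
    and K_dim: "\<forall>i<m. K i \<in> carrier_mat n (q i)"
    and jctrb: "controllable A (hcat n (map B [0..<m]))"
    and jobsv: "observable (vcat n (map C [0..<m])) A"
    and sc: "strongly_connected m nbr"
  shows
    "let Q = mat (n * m) (n * m) (\<lambda>(r, c). (B (c div n) * F (c div n)) $$ (r mod n, c mod n));
         At = kron (1\<^sub>m m) (A + msum n n (\<lambda>j. B j * F j) {..<m}) - Q;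
         Bt = (\<lambda>i. kron (unitv m i) (1\<^sub>m n));
         Ch = (\<lambda>i. C i * transpose_mat (Bt i));
         Cij = (\<lambda>i j. kron (transpose_mat (unitv m i) - transpose_mat (unitv m j)) (1\<^sub>m n));
         Ct = (\<lambda>i. vcat (n * m) (map (Cij i) (sorted_list_of_set (nbhd m nbr i))))
     in \<exists>H :: nat \<Rightarrow> real mat.
          (\<forall>i<m. H i \<in> carrier_mat n (n * card (nbhd m nbr i))) \<and>
          (\<forall>k<m. let Acl = At + msum (n * m) (n * m)
                               (\<lambda>i. Bt i * (K i * Ch i + H i * Ct i)) {..<m}
                  in controllable Acl (Bt k) \<and> controllability_index Acl (Bt k) = m)"
proof -
  have n0: "n > 0" using n_pos by simp
  have m0: "m > 0" using m_pos by simp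
  have "\<forall>x. \<exists>par rk :: nat \<Rightarrow> nat. x < m \<longrightarrow> (\<forall>a<m. a \<noteq> x \<longrightarrow> par a < m \<and> nbr a (par a) \<and> par a \<noteq> a \<and> rk (par a) < rk a)"
    using bfs_tree[OF sc] by blast
  then obtain PP RR :: "nat \<Rightarrow> nat \<Rightarrow> nat" where tree:
    "\<forall>x<m. \<forall>a<m. a \<noteq> x \<longrightarrow> PP x a < m \<and> nbr a (PP x a) \<and> PP x a \<noteq> a \<and> RR x (PP x a) < RR x a"
    by metis
  define lag where "lag = (\<lambda>x s. \<Prod>p'\<in>{..<m}-{x}. (s - real p') / (real x - real p'))"
  define Ws where "Ws = (\<lambda>s a j. \<Sum>x<m. lag x s * Wt x (PP x) a j)"
  define u where "u = (\<lambda>s. \<Prod>x<m. (s - real x))"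
  define At where "At = kron (1\<^sub>m m) (A + msum n n (\<lambda>j. B j * F j) {..<m}) -
      mat (n * m) (n * m) (\<lambda>(r, c). (B (c div n) * F (c div n)) $$ (r mod n, c mod n))"
  define Y0 where "Y0 = At + msum (n * m) (n * m) (\<lambda>i. kron (unitv m i) (1\<^sub>m n) * (K i * (C i * transpose_mat (kron (unitv m i) (1\<^sub>m n))))) {..<m}"
  define Zs where "Zs = (\<lambda>s. u s \<cdot>\<^sub>m Y0 + Xf n m nbr (Ws s))"
  define fq where "fq = (\<lambda>x s. det (hcat (n*m) (map (\<lambda>k. Zs s ^\<^sub>m k * kron (unitv m x) (1\<^sub>m n)) [0..<m])))"
  have Atc: "At \<in> carrier_mat (n*m) (n*m)" unfolding At_def carrier_mat_def by simp
  have Y0c: "Y0 \<in> carrier_mat (n*m) (n*m)" unfolding Y0_def msum_def using Atc by simp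
  have Xc: "Xf n m nbr W \<in> carrier_mat (n*m) (n*m)" for W by (rule Xf_carrier)
  have Zc: "Zs s \<in> carrier_mat (n*m) (n*m)" for s unfolding Zs_def using Y0c Xc by simp
  have pf_lag: "polyfun (lag x)" for x
    unfolding lag_def by (intro polyfun_prod ballI polyfun_div_const polyfun_diff polyfun_id polyfun_const)
  have pf_Ws: "polyfun (\<lambda>s. Ws s a j)" for a j
    unfolding Ws_def by (intro polyfun_sum ballI polyfun_mult pf_lag polyfun_const)
  have pf_u: "polyfun u" unfolding u_def by (intro polyfun_prod ballI polyfun_diff polyfun_id polyfun_const)
  have pm_X: "pmat (\<lambda>s. Xf n m nbr (Ws s)) (n*m) (n*m)"
    unfolding pmat_def
  proof (intro conjI allI impI)
    fix s show "Xf n m nbr (Ws s) \<in> carrier_mat (n*m) (n*m)" by (rule Xf_carrier)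
  next
    fix r c assume rc: "r < n*m" "c < n*m"
    have "polyfun (\<lambda>s. if r mod n = c mod n then Lf m nbr (Ws s) (r div n) (c div n) else 0)"
      unfolding Lf_def
      by (intro polyfun_if polyfun_diff polyfun_sum ballI pf_Ws polyfun_const)
    then show "polyfun (\<lambda>s. Xf n m nbr (Ws s) $$ (r,c))" using rc by (simp add: Xf_def)
  qed
  have pm_Z: "pmat Zs (n*m) (n*m)"
    unfolding Zs_def by (intro pmat_add pmat_smult pf_u pmat_const[OF Y0c] pm_X)
  have pf_f: "polyfun (fq x)" for x
  proof -
    have "pmat (\<lambda>s. Zs s ^\<^sub>m k * kron (unitv m x) (1\<^sub>m n)) (n*m) n" for k
      by (intro pmat_mult[OF pmat_pow[OF pm_Z]] pmat_const kron_unit_carrier)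
    then have "pmat (\<lambda>s. hcat (n*m) (map (\<lambda>k. Zs s ^\<^sub>m k * kron (unitv m x) (1\<^sub>m n)) [0..<m])) (n*m) (m*n)"
      by (intro pmat_hcat) auto
    then have "pmat (\<lambda>s. hcat (n*m) (map (\<lambda>k. Zs s ^\<^sub>m k * kron (unitv m x) (1\<^sub>m n)) [0..<m])) (n*m) (n*m)"
      by (simp add: mult.commute)
    from polyfun_det[OF this] show ?thesis unfolding fq_def .
  qed
  have fq_node: "fq x (real x) \<noteq> 0" if x: "x < m" for x
  proof -
    have u0: "u (real x) = 0" unfolding u_def using x by (intro prod_zero) auto
    have lagv: "lag p (real x) = (if p = x then 1 else 0)" if "p < m" for p
      unfolding lag_def using lag_val[OF that x] .
    have "Ws (real x) = Wt x (PP x)"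
    proof (intro ext)
      fix a j
      have "Ws (real x) a j = (\<Sum>p<m. (if p = x then Wt p (PP p) a j else 0))"
        unfolding Ws_def by (intro sum.cong refl) (simp add: lagv)
      also have "\<dots> = Wt x (PP x) a j" using x by (subst sum.delta) auto
      finally show "Ws (real x) a j = Wt x (PP x) a j" .
    qed
    then have "Zs (real x) = 0 \<cdot>\<^sub>m Y0 + Xf n m nbr (Wt x (PP x))"
      unfolding Zs_def u0 by simp
    also have "\<dots> = Xf n m nbr (Wt x (PP x))"
    proof (rule eq_matI)
      fix i j assume "i < dim_row (Xf n m nbr (Wt x (PP x)))" "j < dim_col (Xf n m nbr (Wt x (PP x)))"
      then have ij: "i < n*m" "j < n*m" by (simp_all add: Xf_def)
      have "(0 \<cdot>\<^sub>m Y0) $$ (i,j) = 0" using Y0c ij by simp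
      moreover have "(0 \<cdot>\<^sub>m Y0 + Xf n m nbr (Wt x (PP x))) $$ (i,j) = (0 \<cdot>\<^sub>m Y0) $$ (i,j) + Xf n m nbr (Wt x (PP x)) $$ (i,j)"
        using ij by (simp add: Xf_def)
      ultimately show "(0 \<cdot>\<^sub>m Y0 + Xf n m nbr (Wt x (PP x))) $$ (i,j) = Xf n m nbr (Wt x (PP x)) $$ (i,j)" by simp
    qed (simp_all add: Xf_def)
    finally have "Zs (real x) = Xf n m nbr (Wt x (PP x))" .
    moreover have "det (hcat (n*m) (map (\<lambda>k. Xf n m nbr (Wt x (PP x)) ^\<^sub>m k * kron (unitv m x) (1\<^sub>m n)) [0..<m])) \<noteq> 0"
      by (rule witness_det[where rk = "RR x", OF n0 x]) (use tree x in blast)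
    ultimately show ?thesis unfolding fq_def by simp
  qed
  have "\<exists>s. s \<notin> real ` {..<m} \<and> (\<forall>x<m. fq x s \<noteq> 0)"
    by (rule choose_point) (use pf_f fq_node in blast)+
  then obtain s where s: "s \<notin> real ` {..<m}" "\<forall>x<m. fq x s \<noteq> 0" by blast
  have us: "u s \<noteq> 0" unfolding u_def using s(1) by (auto simp: prod_zero_iff)
  define t where "t = 1 / u s"
  have t0: "t \<noteq> 0" unfolding t_def using us by simp
  have tu: "t * u s = 1" unfolding t_def using us by simp
  define H where "H = (\<lambda>i. t \<cdot>\<^sub>m hcat n (map (\<lambda>j. Ws s i j \<cdot>\<^sub>m 1\<^sub>m n) (sorted_list_of_set (nbhd m nbr i))))"
  have H0c: "hcat n (map (\<lambda>j. Ws s i j \<cdot>\<^sub>m 1\<^sub>m n) (sorted_list_of_set (nbhd m nbr i))) \<in> carrier_mat n (card (nbhd m nbr i) * n)" for i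
    using hcat_carrier[of "map (\<lambda>j. Ws s i j \<cdot>\<^sub>m 1\<^sub>m n) (sorted_list_of_set (nbhd m nbr i))" n n]
    by (auto simp: finite_nbhd)
  have Hc: "\<forall>i<m. H i \<in> carrier_mat n (n * card (nbhd m nbr i))"
    unfolding H_def using H0c by (simp add: mult.commute)
  have Ctc: "vcat (n * m) (map (\<lambda>j. kron (transpose_mat (unitv m i) - transpose_mat (unitv m j)) (1\<^sub>m n)) (sorted_list_of_set (nbhd m nbr i))) \<in> carrier_mat (card (nbhd m nbr i) * n) (n*m)" for i
    using vcat_carrier[of "map (\<lambda>j. kron (transpose_mat (unitv m i) - transpose_mat (unitv m j)) (1\<^sub>m n)) (sorted_list_of_set (nbhd m nbr i))" n "n*m"]
      Cij_carrier by (auto simp: finite_nbhd)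
  have Pc: "K i * (C i * transpose_mat (kron (unitv m i) (1\<^sub>m n))) \<in> carrier_mat n (n*m)" if "i < m" for i
    using K_dim C_dim that kron_unit_carrier[of m i n] by (meson mult_carrier_mat transpose_carrier_mat)
  define Acl where "Acl = At + msum (n * m) (n * m) (\<lambda>i. kron (unitv m i) (1\<^sub>m n) *
      (K i * (C i * transpose_mat (kron (unitv m i) (1\<^sub>m n))) +
       H i * vcat (n * m) (map (\<lambda>j. kron (transpose_mat (unitv m i) - transpose_mat (unitv m j)) (1\<^sub>m n)) (sorted_list_of_set (nbhd m nbr i))))) {..<m}"
  have Acl_eq: "Acl = t \<cdot>\<^sub>m Zs s"
  proof (rule eq_matI)
    fix r c assume "r < dim_row (t \<cdot>\<^sub>m Zs s)" "c < dim_col (t \<cdot>\<^sub>m Zs s)"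
    then have r: "r < n*m" and c: "c < n*m" using Zc[of s] by auto
    define Gi where "Gi = (\<lambda>i. kron (unitv m i) (1\<^sub>m n) * (hcat n (map (\<lambda>j. Ws s i j \<cdot>\<^sub>m 1\<^sub>m n) (sorted_list_of_set (nbhd m nbr i))) *
       vcat (n * m) (map (\<lambda>j. kron (transpose_mat (unitv m i) - transpose_mat (unitv m j)) (1\<^sub>m n)) (sorted_list_of_set (nbhd m nbr i)))))"
    define Pi where "Pi = (\<lambda>i. kron (unitv m i) (1\<^sub>m n) * (K i * (C i * transpose_mat (kron (unitv m i) (1\<^sub>m n)))))"
    have blk: "kron (unitv m i) (1\<^sub>m n) * (K i * (C i * transpose_mat (kron (unitv m i) (1\<^sub>m n))) +
       H i * vcat (n * m) (map (\<lambda>j. kron (transpose_mat (unitv m i) - transpose_mat (unitv m j)) (1\<^sub>m n)) (sorted_list_of_set (nbhd m nbr i))))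
       = Pi i + t \<cdot>\<^sub>m Gi i" if i: "i < m" for i
      unfolding H_def Pi_def Gi_def by (rule lin_block[OF kron_unit_carrier Pc[OF i] H0c Ctc])
    have Gic: "Gi i \<in> carrier_mat (n*m) (n*m)" for i
      unfolding Gi_def using kron_unit_carrier H0c Ctc by (meson mult_carrier_mat)
    have Pic: "Pi i \<in> carrier_mat (n*m) (n*m)" if "i < m" for i
      unfolding Pi_def using kron_unit_carrier Pc[OF that] by (meson mult_carrier_mat)
    have "Acl $$ (r,c) = At $$ (r,c) + (\<Sum>i<m. (Pi i + t \<cdot>\<^sub>m Gi i) $$ (r,c))"
      unfolding Acl_def msum_def using Atc r c blk by simp
    also have "\<dots> = At $$ (r,c) + (\<Sum>i<m. Pi i $$ (r,c)) + t * (\<Sum>i<m. Gi i $$ (r,c))"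
    proof -
      have "(\<Sum>i<m. (Pi i + t \<cdot>\<^sub>m Gi i) $$ (r,c)) = (\<Sum>i<m. Pi i $$ (r,c) + t * Gi i $$ (r,c))"
      proof (intro sum.cong refl)
        fix i assume "i \<in> {..<m}"
        then have a: "Pi i \<in> carrier_mat (n*m) (n*m)" and b: "Gi i \<in> carrier_mat (n*m) (n*m)"
          using Pic Gic by auto
        show "(Pi i + t \<cdot>\<^sub>m Gi i) $$ (r,c) = Pi i $$ (r,c) + t * Gi i $$ (r,c)"
          using a b r c by simp
      qed
      then show ?thesis by (simp add: sum.distrib sum_distrib_left)
    qed
    also have "(\<Sum>i<m. Gi i $$ (r,c)) = Xf n m nbr (Ws s) $$ (r,c)"
      using arg_cong[OF msum_block[OF n0, of m "Ws s" nbr], of "\<lambda>M. M $$ (r,c)"] r c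
      unfolding Gi_def by (simp add: msum_def)
    also have "At $$ (r,c) + (\<Sum>i<m. Pi i $$ (r,c)) = Y0 $$ (r,c)"
      unfolding Y0_def Pi_def msum_def using Atc r c by simp
    also have "Y0 $$ (r,c) + t * Xf n m nbr (Ws s) $$ (r,c) = (t \<cdot>\<^sub>m Zs s) $$ (r,c)"
    proof -
      have X1: "Xf n m nbr (Ws s) \<in> carrier_mat (n*m) (n*m)" by (rule Xc)
      have "(t \<cdot>\<^sub>m (u s \<cdot>\<^sub>m Y0 + Xf n m nbr (Ws s))) $$ (r,c) = t * (u s * Y0 $$ (r,c) + Xf n m nbr (Ws s) $$ (r,c))"
        using Y0c X1 r c by simp
      also have "\<dots> = (t * u s) * Y0 $$ (r,c) + t * Xf n m nbr (Ws s) $$ (r,c)" by (simp add: algebra_simps)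
      finally show ?thesis unfolding Zs_def tu by simp
    qed
    finally show "Acl $$ (r,c) = (t \<cdot>\<^sub>m Zs s) $$ (r,c)" .
  next
    show "dim_row Acl = dim_row (t \<cdot>\<^sub>m Zs s)" unfolding Acl_def msum_def using Zc[of s] by simp
    show "dim_col Acl = dim_col (t \<cdot>\<^sub>m Zs s)" unfolding Acl_def msum_def using Zc[of s] by simp
  qed
  have main: "controllable Acl (kron (unitv m x) (1\<^sub>m n)) \<and> controllability_index Acl (kron (unitv m x) (1\<^sub>m n)) = m"
    if x: "x < m" for x
  proof -
    have Aclc: "Acl \<in> carrier_mat (n*m) (n*m)" unfolding Acl_eq using Zc[of s] by simp
    have "det (hcat (n*m) (map (\<lambda>k. (t \<cdot>\<^sub>m Zs s) ^\<^sub>m k * kron (unitv m x) (1\<^sub>m n)) [0..<m])) \<noteq> 0"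
      by (rule scale_det[OF Zc kron_unit_carrier refl n0 t0]) (use s(2) x in \<open>simp add: fq_def\<close>)
    then have "det (ctrb_mat Acl (kron (unitv m x) (1\<^sub>m n)) m) \<noteq> 0"
      unfolding ctrb_mat_def Acl_eq using Zc[of s] by simp
    then show ?thesis by (rule ctrb_conclude[OF Aclc kron_unit_carrier n0 m0])
  qed
  show ?thesis
    unfolding Let_def
    by (rule exI[of _ H]) (use Hc main in \<open>simp add: Acl_def At_def\<close>)
qed

end
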